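(* Consider the age-agnostic randomized policy $\pi=(f_0,f_1)$, where $f_0,f_1>0$ with $p_sf_0<1$ and $p_sf_1<1$, and set $f^i_\alpha=p_sf_i$, $\bar f^i_\alpha=1-p_sf_i$ for $i\in\{0,1\}$. Let MC1 denote the process $\{(X_t,\hat X_t)\}_{t\ge1}$ and MC2 the process $\{S_t\}_{t\ge1}=\{(X_t,\hat X_t,\Delta_t)\}_{t\ge1}$ induced by $\pi$. Then: (i) MC1 is a finite-state ergodic Markov chain with stationary distribution $\nu_{0,0}=q(\bar p f^0_\alpha+pf^1_\alpha)(q+\bar q f^1_\alpha)/\zeta$, $\nu_{0,1}=pq\bar f^1_\alpha(qf^0_\alpha+\bar q f^1_\alpha)/\zeta$, $\nu_{1,0}=pq\bar f^0_\alpha(\bar p f^0_\alpha+pf^1_\alpha)/\zeta$, $\nu_{1,1}=p(qf^0_\alpha+\bar q f^1_\alpha)(p+\bar p f^0_\alpha)/\zeta$, where $\zeta=(p+q)\big(qf^0_\alpha+pf^1_\alpha+(1-p-q)f^0_\alpha f^1_\alpha\big)$. (ii) MC2 is a countable-state, irreducible, positive recurrent Markov chain with stationary distribution $\nu_{0,0,0}=\nu_{0,0}$, $\nu_{1,1,0}=\nu_{1,1}$, $\nu_{1,0,k}=p\bar f^0_\alpha(\bar q\bar f^1_\alpha)^{k-1}\nu_{0,0}$ and $\nu_{0,1,k}=q\bar f^1_\alpha(\bar p\bar f^0_\alpha)^{k-1}\nu_{1,1}$ for $k\ge1$, and the average cost of $\pi$ is $$\mathcal L(\pi)=\frac{\beta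 p\bar f^0_\alpha\nu_{0,0}}{(1-\bar q\bar f^1_\alpha)^2}+\frac{(1-\beta)q\bar f^1_\alpha\nu_{1,1}}{(1-\bar p\bar f^0_\alpha)^2}+\frac{\lambda(qf_0+pf_1)}{p+q}.$$ (iii) There exists a state $z\in\mathcal S$ such that the expected first passage time of MC2 from any state $i\in\mathcal S\setminus\{z\}$ to $z$ is finite. (iv) For the state $z$ in (iii), the expected first passage cost (accumulated expected per-stage cost until hitting $z$) from any $i\in\mathcal S\setminus\{z\}$ to $z$ is finite.
   Context: Fix $p,q\in(0,1)$, $\bar p=1-p$, $\bar q=1-q$. The source $\{X_t\}_{t\ge1}$ is a Markov chain on $\{0,1\}$ ($0$ = normal, $1$ = alarm) with $\Pr[X_{t+1}=1\mid X_t=0]=p$, $\Pr[X_{t+1}=0\mid X_t=1]=q$. The channel $\{H_t\}$ is i.i.d. Bernoulli with success probability $p_s\in(0,1]$, independent of the source; $p_f=1-p_s$. At each slot $t$ the sensor chooses $A_t\in\{0,1\}$ as a (possibly randomized) function of $(X_{1:t},\hat X_{1:t},A_{1:t-1})$. Estimate dynamics: if $A_t=1$ and $H_{t+1}=1$ then $\hat X_{t+1}=X_{t+1}$, otherwise $\hat X_{t+1}=\hat X_t$. Age: $\Delta_{t+1}=\Delta_t+1$ if $X_{t+1}\ne\hat X_{t+1}$ and $\Delta_{t+1}=0$ otherwise. The state $S_t=(X_t,\hat X_t,\Delta_t)$ lives in $\mathcal S=\{(0,0,0),(1,1,0)\}\cup\{(1,0,\delta),(0,1,\delta):\delta\ge1\}$,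 with $S_1=(0,0,0)$. Per-state cost $c(s)=\beta\delta$ if $s=(1,0,\delta)$, $c(s)=(1-\beta)\delta$ if $s=(0,1,\delta)$, and $c(s)=0$ for $s\in\{(0,0,0),(1,1,0)\}$, where $\beta\in[0,1]$. Per-stage cost $\ell(s,a)=\mathbb E[c(S_{t+1})\mid S_t=s,A_t=a]+\lambda\mathbb 1\{a=1\}$ with $\lambda\ge0$. Average cost of a policy $\pi$: $\mathcal L(\pi)=\limsup_{T\to\infty}\frac1T\sum_{t=1}^T\mathbb E^\pi[\ell(S_t,A_t)\mid S_1=(0,0,0)]$. The age-agnostic randomized policy $(f_0,f_1)$ transmits ($A_t=1$) at each slot independently with probability $f_i$ when $X_t=i$. *)

theory Defs
  imports "HOL-Probability.Probability"
begin

primrec kpow :: "('s \<Rightarrow> 's pmf) \<Rightarrow> nat \<Rightarrow> 's \<Rightarrow> 's pmf" where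
  "kpow K 0 i = return_pmf i"
| "kpow K (Suc n) i = bind_pmf (kpow K n i) K"

text \<open>Taboo expectation: taboo K z g n i = E_i[ g(X_n) ; X_1,...,X_n all different from z ].\<close>
primrec taboo :: "('s \<Rightarrow> 's pmf) \<Rightarrow> 's \<Rightarrow> ('s \<Rightarrow> ennreal) \<Rightarrow> nat \<Rightarrow> 's \<Rightarrow> ennreal" where
  "taboo K z g 0 i = g i"
| "taboo K z g (Suc n) i = (\<integral>\<^sup>+ s. (if s = z then 0 else taboo K z g n s) \<partial>measure_pmf (K i))"

text \<open>Expected first passage time from i to z: E_i[tau_z] with tau_z = min{n >= 1. X_n = z},
  computed as sum over n >= 0 of P_i(tau_z > n) (value infinity if tau_z = infinity with positive probability).\<close>
definition passage_time :: "('s \<Rightarrow> 's pmf) \<Rightarrow> 's \<Rightarrow> 's \<Rightarrow> ennreal" where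
  "passage_time K z i = (\<Sum>n. taboo K z (\<lambda>_. 1) n i)"

text \<open>Expected first passage cost: E_i[ sum_{t=0}^{tau_z - 1} g(X_t) ].\<close>
definition passage_cost :: "('s \<Rightarrow> 's pmf) \<Rightarrow> 's \<Rightarrow> ('s \<Rightarrow> ennreal) \<Rightarrow> 's \<Rightarrow> ennreal" where
  "passage_cost K z g i = (\<Sum>n. taboo K z g n i)"

definition closed_on :: "('s \<Rightarrow> 's pmf) \<Rightarrow> 's set \<Rightarrow> bool" where
  "closed_on K S \<longleftrightarrow> (\<forall>s\<in>S. set_pmf (K s) \<subseteq> S)"

definition irreducible_on :: "('s \<Rightarrow> 's pmf) \<Rightarrow> 's set \<Rightarrow> bool" where
  "irreducible_on K S \<longleftrightarrow> closed_on K S \<and> (\<forall>i\<in>S. \<forall>j\<in>S. \<exists>n. pmf (kpow K n i) j > 0)"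

definition aperiodic_on :: "('s \<Rightarrow> 's pmf) \<Rightarrow> 's set \<Rightarrow> bool" where
  "aperiodic_on K S \<longleftrightarrow> (\<forall>i\<in>S. Gcd {n. n > 0 \<and> pmf (kpow K n i) i > 0} = 1)"

definition positive_recurrent_on :: "('s \<Rightarrow> 's pmf) \<Rightarrow> 's set \<Rightarrow> bool" where
  "positive_recurrent_on K S \<longleftrightarrow> (\<forall>i\<in>S. passage_time K i i < \<infinity>)"

definition ergodic_on :: "('s \<Rightarrow> 's pmf) \<Rightarrow> 's set \<Rightarrow> bool" where
  "ergodic_on K S \<longleftrightarrow> irreducible_on K S \<and> aperiodic_on K S \<and> positive_recurrent_on K S"

definition stationary_on :: "('s \<Rightarrow> 's pmf) \<Rightarrow> 's set \<Rightarrow> 's pmf \<Rightarrow> bool" where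
  "stationary_on K S \<nu> \<longleftrightarrow> set_pmf \<nu> \<subseteq> S \<and> bind_pmf \<nu> K = \<nu>"

section \<open>The remote-estimation model (0 = normal, 1 = alarm)\<close>

definition src :: "real \<Rightarrow> real \<Rightarrow> nat \<Rightarrow> nat pmf" where
  "src p q x = (if x = 0 then map_pmf (\<lambda>b. if b then 1 else 0) (bernoulli_pmf p)
                else map_pmf (\<lambda>b. if b then 0 else 1) (bernoulli_pmf q))"

definition act :: "real \<Rightarrow> real \<Rightarrow> nat \<Rightarrow> bool pmf" where
  "act f0 f1 x = bernoulli_pmf (if x = 0 then f0 else f1)"

text \<open>One step of (X, Xhat) given action a: X_{t+1} from the source, H_{t+1} ~ Bernoulli(ps)
  independent; Xhat_{t+1} = X_{t+1} if a and H_{t+1}, else Xhat_t.\<close>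
definition est_step :: "real \<Rightarrow> real \<Rightarrow> real \<Rightarrow> nat \<times> nat \<Rightarrow> bool \<Rightarrow> (nat \<times> nat) pmf" where
  "est_step p q ps s a =
     bind_pmf (src p q (fst s)) (\<lambda>x'. bind_pmf (bernoulli_pmf ps) (\<lambda>h.
       return_pmf (x', if a \<and> h then x' else snd s)))"

definition sys_step :: "real \<Rightarrow> real \<Rightarrow> real \<Rightarrow> nat \<times> nat \<times> nat \<Rightarrow> bool \<Rightarrow> (nat \<times> nat \<times> nat) pmf" where
  "sys_step p q ps s a =
     map_pmf (\<lambda>(x', xh'). (x', xh', if x' \<noteq> xh' then snd (snd s) + 1 else 0))
       (est_step p q ps (fst s, fst (snd s)) a)"

definition K1 :: "real \<Rightarrow> real \<Rightarrow> real \<Rightarrow> real \<Rightarrow> real \<Rightarrow> nat \<times> nat \<Rightarrow> (nat \<times> nat) pmf" where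
  "K1 p q ps f0 f1 s = bind_pmf (act f0 f1 (fst s)) (est_step p q ps s)"

definition K2 :: "real \<Rightarrow> real \<Rightarrow> real \<Rightarrow> real \<Rightarrow> real \<Rightarrow> nat \<times> nat \<times> nat \<Rightarrow> (nat \<times> nat \<times> nat) pmf" where
  "K2 p q ps f0 f1 s = bind_pmf (act f0 f1 (fst s)) (sys_step p q ps s)"

definition S1 :: "(nat \<times> nat) set" where
  "S1 = {0, 1} \<times> {0, 1}"

definition S2 :: "(nat \<times> nat \<times> nat) set" where
  "S2 = {(0, 0, 0), (1, 1, 0)} \<union> {(1, 0, d) | d. d \<ge> 1} \<union> {(0, 1, d) | d. d \<ge> 1}"

definition cst :: "real \<Rightarrow> nat \<times> nat \<times> nat \<Rightarrow> real" where
  "cst \<beta> s = (if fst s = 1 \<and> fst (snd s) = 0 then \<beta> * real (snd (snd s))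
              else if fst s = 0 \<and> fst (snd s) = 1 then (1 - \<beta>) * real (snd (snd s)) else 0)"

definition stage_cost :: "real \<Rightarrow> real \<Rightarrow> real \<Rightarrow> real \<Rightarrow> real \<Rightarrow> nat \<times> nat \<times> nat \<Rightarrow> bool \<Rightarrow> real" where
  "stage_cost p q ps \<beta> lam s a =
     measure_pmf.expectation (sys_step p q ps s a) (cst \<beta>) + (if a then lam else 0)"

definition exp_stage_cost :: "real \<Rightarrow> real \<Rightarrow> real \<Rightarrow> real \<Rightarrow> real \<Rightarrow> real \<Rightarrow> real \<Rightarrow> nat \<times> nat \<times> nat \<Rightarrow> real" where
  "exp_stage_cost p q ps f0 f1 \<beta> lam s =
     measure_pmf.expectation (act f0 f1 (fst s)) (stage_cost p q ps \<beta> lam s)"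

text \<open>Average cost L(pi) = limsup_T (1/T) sum_{t=1}^T E[l(S_t,A_t)], with S_1 = (0,0,0);
  the law of S_t is the (t-1)-step law of MC2 from (0,0,0).\<close>
definition avg_cost :: "real \<Rightarrow> real \<Rightarrow> real \<Rightarrow> real \<Rightarrow> real \<Rightarrow> real \<Rightarrow> real \<Rightarrow> ereal" where
  "avg_cost p q ps f0 f1 \<beta> lam =
     limsup (\<lambda>T::nat. ereal ((1 / real T) * (\<Sum>t = 1..T.
        measure_pmf.expectation (kpow (K2 p q ps f0 f1) (t - 1) (0, 0, 0))
          (exp_stage_cost p q ps f0 f1 \<beta> lam))))"


section \<open>Closed-form stationary quantities (a0 = ps*f0, a1 = ps*f1 are f^0_alpha, f^1_alpha)\<close>

definition zeta :: "real \<Rightarrow> real \<Rightarrow> real \<Rightarrow> real \<Rightarrow> real" where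
  "zeta p q a0 a1 = (p + q) * (q * a0 + p * a1 + (1 - p - q) * a0 * a1)"

definition nu00 :: "real \<Rightarrow> real \<Rightarrow> real \<Rightarrow> real \<Rightarrow> real" where
  "nu00 p q a0 a1 = q * ((1 - p) * a0 + p * a1) * (q + (1 - q) * a1) / zeta p q a0 a1"

definition nu01 :: "real \<Rightarrow> real \<Rightarrow> real \<Rightarrow> real \<Rightarrow> real" where
  "nu01 p q a0 a1 = p * q * (1 - a1) * (q * a0 + (1 - q) * a1) / zeta p q a0 a1"

definition nu10 :: "real \<Rightarrow> real \<Rightarrow> real \<Rightarrow> real \<Rightarrow> real" where
  "nu10 p q a0 a1 = p * q * (1 - a0) * ((1 - p) * a0 + p * a1) / zeta p q a0 a1"

definition nu11 :: "real \<Rightarrow> real \<Rightarrow> real \<Rightarrow> real \<Rightarrow> real" where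
  "nu11 p q a0 a1 = p * (q * a0 + (1 - q) * a1) * (p + (1 - p) * a0) / zeta p q a0 a1"

end

theory Submission
  imports Defs
begin


definition Psrc :: "real \<Rightarrow> real \<Rightarrow> nat \<Rightarrow> nat \<Rightarrow> real" where
  "Psrc p q x y = (if x = 0 then (if y = 1 then p else if y = 0 then 1 - p else 0)
                              else (if y = 0 then q else if y = 1 then 1 - q else 0))"

lemma pmf_src:
  assumes "0 \<le> p" "p \<le> 1" "0 \<le> q" "q \<le> 1"
  shows "pmf (src p q x) y = Psrc p q x y"
  using assms unfolding src_def map_pmf_def Psrc_def
  by (auto simp: pmf_bind pmf_return indicator_def)

definition aa :: "real \<Rightarrow> real \<Rightarrow> real \<Rightarrow> nat \<Rightarrow> real" where
  "aa ps f0 f1 x = ps * (if x = 0 then f0 else f1)"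

lemma pmf_K1:
  assumes "0 \<le> p" "p \<le> 1" "0 \<le> q" "q \<le> 1" "0 \<le> ps" "ps \<le> 1" "0 \<le> f0" "f0 \<le> 1" "0 \<le> f1" "f1 \<le> 1"
  shows "pmf (K1 p q ps f0 f1 (x, xh)) (y, yh) =
     Psrc p q x y * ((if yh = y then aa ps f0 f1 x else 0) + (if yh = xh then 1 - aa ps f0 f1 x else 0))"
  using assms unfolding K1_def act_def est_step_def aa_def Psrc_def
  by (cases "x = 0") (auto simp: src_def bind_map_pmf pmf_bind indicator_def algebra_simps)


lemma kpow_Suc': "kpow K (Suc n) i = bind_pmf (K i) (\<lambda>s. kpow K n s)"
proof (induction n arbitrary: i)
  case 0 then show ?case by (simp add: bind_return_pmf bind_return_pmf')
next
  case (Suc n)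
  have "kpow K (Suc (Suc n)) i = bind_pmf (kpow K (Suc n) i) K" by (simp only: kpow.simps)
  also have "\<dots> = bind_pmf (bind_pmf (K i) (kpow K n)) K" by (simp only: Suc)
  also have "\<dots> = bind_pmf (K i) (\<lambda>s. bind_pmf (kpow K n s) K)"
    by (rule bind_assoc_pmf)
  finally show ?case by (simp only: kpow.simps)
qed

lemma taboo_add: "taboo K z g (m + n) i = taboo K z (taboo K z g n) m i"
proof (induction m arbitrary: i)
  case (Suc m)
  show ?case by simp (rule nn_integral_cong, simp add: Suc.IH)
qed simp

lemma taboo_mono: "(\<And>s. g s \<le> h s) \<Longrightarrow> taboo K z g n i \<le> taboo K z h n i"
  by (induction n arbitrary: i) (auto intro!: nn_integral_mono)

lemma taboo_cmult: "taboo K z (\<lambda>s. c * g s) n i = c * taboo K z g n i"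
proof (induction n arbitrary: i)
  case (Suc n)
  have "taboo K z (\<lambda>s. c * g s) (Suc n) i = (\<integral>\<^sup>+ s. c * (if s = z then 0 else taboo K z g n s) \<partial>measure_pmf (K i))"
    by (simp add: Suc if_distrib cong: if_cong)
  also have "\<dots> = c * taboo K z g (Suc n) i"
    by (subst nn_integral_cmult) auto
  finally show ?case .
qed simp

lemma taboo_le_kpow: "taboo K z g n i \<le> (\<integral>\<^sup>+ s. g s \<partial>measure_pmf (kpow K n i))"
proof (induction n arbitrary: i)
  case (Suc n)
  have "taboo K z g (Suc n) i \<le> (\<integral>\<^sup>+ s. (\<integral>\<^sup>+ y. g y \<partial>measure_pmf (kpow K n s)) \<partial>measure_pmf (K i))"
    by (auto intro!: nn_integral_mono order.trans[OF _ Suc])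
  also have "\<dots> = (\<integral>\<^sup>+ s. g s \<partial>measure_pmf (kpow K (Suc n) i))"
    by (simp only: kpow_Suc' nn_integral_bind_pmf)
  finally show ?case .
qed simp

lemma taboo_one_le_one: "taboo K z (\<lambda>_. 1) n i \<le> 1"
  using taboo_le_kpow[of K z "\<lambda>_. 1" n i] by (simp add: measure_pmf.emeasure_space_1)

lemma taboo_one_Suc_le: "taboo K z (\<lambda>_. 1) (Suc m) i \<le> 1 - ennreal (pmf (kpow K (Suc m) i) z)"
proof -
  have "taboo K z (\<lambda>_. 1) (Suc m) i = taboo K z (taboo K z (\<lambda>_. 1) 1) m i"
    using taboo_add[of K z "\<lambda>_. 1" m 1 i] by simp
  also have "\<dots> \<le> (\<integral>\<^sup>+ x. taboo K z (\<lambda>_. 1) 1 x \<partial>measure_pmf (kpow K m i))"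
    by (rule taboo_le_kpow)
  also have "\<dots> = (\<integral>\<^sup>+ x. (\<integral>\<^sup>+ y. indicator (UNIV - {z}) y \<partial>measure_pmf (K x)) \<partial>measure_pmf (kpow K m i))"
    by (intro nn_integral_cong) (auto intro!: nn_integral_cong simp: indicator_def)
  also have "\<dots> = (\<integral>\<^sup>+ y. indicator (UNIV - {z}) y \<partial>measure_pmf (kpow K (Suc m) i))"
    by simp
  also have "\<dots> = emeasure (measure_pmf (kpow K (Suc m) i)) (UNIV - {z})"
    by simp
  also have "\<dots> = 1 - ennreal (pmf (kpow K (Suc m) i) z)"
    by (subst emeasure_Diff) (auto simp: measure_pmf.emeasure_space_1 emeasure_pmf_single)
  finally show ?thesis .
qed

lemma taboo_geom:
  assumes "\<And>i. taboo K z (\<lambda>_. 1) M i \<le> ennreal r" "0 \<le> r"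
  shows "taboo K z (\<lambda>_. 1) (k * M) i \<le> ennreal (r ^ k)"
proof (induction k arbitrary: i)
  case 0 then show ?case by simp
next
  case (Suc k)
  have "taboo K z (\<lambda>_. 1) (Suc k * M) i = taboo K z (taboo K z (\<lambda>_. 1) (k * M)) M i"
    using taboo_add[of K z "\<lambda>_. 1" M "k*M" i] by (simp add: add.commute)
  also have "\<dots> \<le> taboo K z (\<lambda>s. ennreal (r ^ k) * 1) M i"
    by (rule taboo_mono) (use Suc in simp)
  also have "\<dots> = ennreal (r ^ k) * taboo K z (\<lambda>_. 1) M i"
    by (rule taboo_cmult)
  also have "\<dots> \<le> ennreal (r ^ k) * ennreal r"
    by (intro mult_left_mono assms) auto
  also have "\<dots> = ennreal (r ^ Suc k)"
    using assms(2) by (simp add: ennreal_mult' mult.commute)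
  finally show ?case .
qed

lemma summable_pow_div:
  fixes r :: real
  assumes "0 < r" "r < 1" "0 < M"
  shows "summable (\<lambda>n. r ^ (n div M))"
proof -
  define \<rho> where "\<rho> = root M r"
  have r1: "0 < \<rho>" "\<rho> < 1" using assms by (auto simp: \<rho>_def)
  have rM: "\<rho> ^ M = r" using assms by (simp add: \<rho>_def real_root_pow_pos2)
  have le: "r ^ (n div M) \<le> \<rho> ^ n / r" for n
  proof -
    have "n \<le> M * (n div M) + M"
      using assms(3) by (metis add_le_mono div_mult_mod_eq le_refl less_imp_le mod_less_divisor mult.commute)
    then have "\<rho> ^ (M * (n div M) + M) \<le> \<rho> ^ n"
      using r1 by (intro power_decreasing) auto
    then have "r ^ (n div M) * r \<le> \<rho> ^ n"
      by (simp add: power_add power_mult rM[symmetric])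
    then show ?thesis using assms by (simp add: field_simps)
  qed
  show ?thesis
    by (rule summable_comparison_test[where g="\<lambda>n. \<rho> ^ n / r"])
       (use le r1 assms in \<open>auto intro!: summable_divide summable_geometric\<close>)
qed

lemma passage_time_finite:
  assumes "\<And>s. ennreal \<epsilon> \<le> ennreal (pmf (kpow K (Suc M) s) z)" "0 < \<epsilon>"
  shows "passage_time K z i < \<infinity>"
proof -
  define r where "r = max (1/2) (1 - \<epsilon>)"
  have r: "0 < r" "r < 1" using assms(2) by (auto simp: r_def)
  have tM: "taboo K z (\<lambda>_. 1) (Suc M) s \<le> ennreal r" for s
  proof -
    have "taboo K z (\<lambda>_. 1) (Suc M) s \<le> 1 - ennreal (pmf (kpow K (Suc M) s) z)"
      by (rule taboo_one_Suc_le)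
    also have "\<dots> \<le> 1 - ennreal \<epsilon>"
      by (intro ennreal_minus_mono assms(1)) auto
    also have "\<dots> \<le> ennreal r"
      using assms(2) by (auto simp: r_def ennreal_1[symmetric] ennreal_minus simp del: ennreal_1)
    finally show ?thesis .
  qed
  have tn: "taboo K z (\<lambda>_. 1) n i \<le> ennreal (r ^ (n div Suc M))" for n
  proof -
    have "taboo K z (\<lambda>_. 1) n i = taboo K z (\<lambda>_. 1) ((n div Suc M) * Suc M + n mod Suc M) i"
      by (simp only: div_mult_mod_eq)
    also have "\<dots> = taboo K z (taboo K z (\<lambda>_. 1) (n mod Suc M)) ((n div Suc M) * Suc M) i"
      by (rule taboo_add)
    also have "\<dots> \<le> taboo K z (\<lambda>_. 1) ((n div Suc M) * Suc M) i"
      by (rule taboo_mono) (rule taboo_one_le_one)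
    also have "\<dots> \<le> ennreal (r ^ (n div Suc M))"
      by (rule taboo_geom) (use tM r in auto)
    finally show ?thesis .
  qed
  have sm: "summable (\<lambda>n. r ^ (n div Suc M))" by (rule summable_pow_div) (use r in auto)
  have "passage_time K z i \<le> (\<Sum>n. ennreal (r ^ (n div Suc M)))"
    unfolding passage_time_def by (intro suminf_le tn) auto
  also have "\<dots> = ennreal (\<Sum>n. r ^ (n div Suc M))"
    by (rule suminf_ennreal2) (use sm r in auto)
  finally show ?thesis by (auto simp: top_unique less_top[symmetric])
qed

lemma passage_cost_le:
  assumes "\<And>s. g s + (\<integral>\<^sup>+ y. (if y = z then 0 else V y) \<partial>measure_pmf (K s)) \<le> V s"
  shows "passage_cost K z g i \<le> V i"
proof -
  have part: "(\<Sum>n<N. taboo K z g n s) \<le> V s" for N s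
  proof (induction N arbitrary: s)
    case 0 then show ?case by simp
  next
    case (Suc N)
    have "(\<Sum>n<Suc N. taboo K z g n s) = g s + (\<Sum>n<N. taboo K z g (Suc n) s)"
      by (subst sum.lessThan_Suc_shift) simp
    also have "(\<Sum>n<N. taboo K z g (Suc n) s) = (\<integral>\<^sup>+ y. (\<Sum>n<N. (if y = z then 0 else taboo K z g n y)) \<partial>measure_pmf (K s))"
      by (simp add: nn_integral_sum)
    also have "\<dots> \<le> (\<integral>\<^sup>+ y. (if y = z then 0 else V y) \<partial>measure_pmf (K s))"
      by (intro nn_integral_mono) (auto simp: Suc)
    finally show ?case using assms[of s] by (meson add_left_mono order_trans)
  qed
  show ?thesis unfolding passage_cost_def
    by (subst suminf_eq_SUP) (auto intro!: SUP_least part)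
qed


lemma doeblin_step:
  fixes k :: "'a \<Rightarrow> 'a \<Rightarrow> real" and e :: "'a \<Rightarrow> real"
  assumes S: "finite S" "y0 \<in> S"
    and nn: "\<And>s y. s \<in> S \<Longrightarrow> y \<in> S \<Longrightarrow> 0 \<le> k s y"
    and one: "\<And>s. s \<in> S \<Longrightarrow> (\<Sum>y\<in>S. k s y) = 1"
    and lb: "\<And>s. s \<in> S \<Longrightarrow> \<delta> \<le> k s y0"
    and e0: "(\<Sum>s\<in>S. e s) = 0"
  shows "(\<Sum>y\<in>S. \<bar>\<Sum>s\<in>S. e s * k s y\<bar>) \<le> (1 - \<delta>) * (\<Sum>s\<in>S. \<bar>e s\<bar>)"
proof -
  define c where "c y = (if y = y0 then \<delta> else 0)" for y
  have ec: "(\<Sum>s\<in>S. e s * c y) = 0" for y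
    using e0 by (simp add: sum_distrib_right[symmetric])
  have eq: "(\<Sum>s\<in>S. e s * k s y) = (\<Sum>s\<in>S. e s * (k s y - c y))" for y
    by (simp add: right_diff_distrib sum_subtractf ec)
  have nn2: "0 \<le> k s y - c y" if "s \<in> S" "y \<in> S" for s y
    using nn[OF that] lb[OF that(1)] by (auto simp: c_def)
  have sumc: "(\<Sum>y\<in>S. c y) = \<delta>" using S by (simp add: c_def)
  have "(\<Sum>y\<in>S. \<bar>\<Sum>s\<in>S. e s * k s y\<bar>) \<le> (\<Sum>y\<in>S. \<Sum>s\<in>S. \<bar>e s\<bar> * (k s y - c y))"
    unfolding eq
  proof (intro sum_mono order.trans[OF sum_abs])
    fix y s assume "y \<in> S" "s \<in> S"
    then have "\<bar>k s y - c y\<bar> = k s y - c y" using nn2 by simp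
    then show "\<bar>e s * (k s y - c y)\<bar> \<le> \<bar>e s\<bar> * (k s y - c y)" by (simp add: abs_mult)
  qed
  also have "\<dots> = (\<Sum>s\<in>S. \<bar>e s\<bar> * (\<Sum>y\<in>S. (k s y - c y)))"
    by (subst sum.swap) (simp add: sum_distrib_left)
  also have "\<dots> = (\<Sum>s\<in>S. \<bar>e s\<bar> * (1 - \<delta>))"
    by (intro sum.cong) (auto simp: sum_subtractf one sumc)
  also have "\<dots> = (1 - \<delta>) * (\<Sum>s\<in>S. \<bar>e s\<bar>)"
    by (simp only: sum_distrib_right[symmetric] mult.commute)
  finally show ?thesis .
qed


lemma lin_rec_lim:
  fixes m b :: "nat \<Rightarrow> real"
  assumes rec: "\<And>t. m (Suc t) = \<rho> * m t + b t" and r: "0 \<le> \<rho>" "\<rho> < 1" and bl: "b \<longlonglongrightarrow> B"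
  shows "m \<longlonglongrightarrow> B / (1 - \<rho>)"
proof -
  define c where "c t = m t - B / (1 - \<rho>)" for t
  have crec: "c (Suc t) = \<rho> * c t + (b t - B)" for t
    using r by (simp add: c_def rec divide_simps) (simp add: algebra_simps)
  have "c \<longlonglongrightarrow> 0"
  proof (rule LIMSEQ_I)
    fix \<epsilon> :: real assume \<epsilon>: "0 < \<epsilon>"
    have "0 < \<epsilon> * (1 - \<rho>) / 2" using \<epsilon> r by simp
    from LIMSEQ_D[OF bl this]
    obtain N where N: "\<And>t. t \<ge> N \<Longrightarrow> norm (b t - B) < \<epsilon> * (1 - \<rho>) / 2"
      by auto
    have bound: "\<bar>c (N + j)\<bar> \<le> \<rho> ^ j * \<bar>c N\<bar> + \<epsilon> / 2" for j
    proof (induction j)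
      case 0 then show ?case using \<epsilon> by simp
    next
      case (Suc j)
      have "\<bar>c (N + Suc j)\<bar> \<le> \<rho> * \<bar>c (N + j)\<bar> + \<bar>b (N + j) - B\<bar>"
        using r abs_triangle_ineq[of "\<rho> * c (N + j)" "b (N + j) - B"]
        by (simp add: crec abs_mult)
      also have "\<dots> \<le> \<rho> * (\<rho> ^ j * \<bar>c N\<bar> + \<epsilon> / 2) + \<epsilon> * (1 - \<rho>) / 2"
        by (intro add_mono mult_left_mono Suc.IH) (use r N[of "N+j"] in auto)
      also have "\<dots> = \<rho> ^ Suc j * \<bar>c N\<bar> + \<epsilon> / 2" by (simp add: field_simps)
      finally show ?case .
    qed
    have "(\<lambda>j. \<rho> ^ j * \<bar>c N\<bar>) \<longlonglongrightarrow> 0 * \<bar>c N\<bar>"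
      by (intro tendsto_mult LIMSEQ_power_zero tendsto_const) (use r in auto)
    then have "(\<lambda>j. \<rho> ^ j * \<bar>c N\<bar>) \<longlonglongrightarrow> 0" by simp
    from LIMSEQ_D[OF this, of "\<epsilon>/2"] \<epsilon>
    obtain J where J: "\<And>j. j \<ge> J \<Longrightarrow> norm (\<rho> ^ j * \<bar>c N\<bar> - 0) < \<epsilon> / 2"
      by auto
    show "\<exists>no. \<forall>n\<ge>no. norm (c n - 0) < \<epsilon>"
    proof (intro exI allI impI)
      fix n assume n: "n \<ge> N + J"
      obtain j where j: "n = N + j" "j \<ge> J" using n by (intro that[of "n - N"]) auto
      have "\<rho> ^ j * \<bar>c N\<bar> < \<epsilon> / 2" using J[OF j(2)] r by simp
      then show "norm (c n - 0) < \<epsilon>" using bound[of j] j by simp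
    qed
  qed
  then have "(\<lambda>t. c t + B / (1 - \<rho>)) \<longlonglongrightarrow> 0 + B / (1 - \<rho>)"
    by (intro tendsto_add tendsto_const)
  then show ?thesis by (simp add: c_def)
qed


lemma cesaro:
  fixes a :: "nat \<Rightarrow> real"
  assumes "a \<longlonglongrightarrow> L"
  shows "(\<lambda>T. (1 / real T) * (\<Sum>t<T. a t)) \<longlonglongrightarrow> L"
proof (rule LIMSEQ_I)
  fix \<epsilon> :: real assume \<epsilon>: "0 < \<epsilon>"
  obtain N where N: "\<And>t. t \<ge> N \<Longrightarrow> norm (a t - L) < \<epsilon> / 2"
    using LIMSEQ_D[OF assms, of "\<epsilon>/2"] \<epsilon> by auto
  define C where "C = (\<Sum>t<N. \<bar>a t - L\<bar>)"
  have C0: "0 \<le> C" by (simp add: C_def sum_nonneg)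
  obtain T0 :: nat where T0: "T0 > 2 * C / \<epsilon>" using reals_Archimedean2 by blast
  show "\<exists>no. \<forall>T\<ge>no. norm ((1 / real T) * (\<Sum>t<T. a t) - L) < \<epsilon>"
  proof (intro exI allI impI)
    fix T assume T: "T \<ge> max (Suc N) T0"
    then have Tpos: "real T > 0" by auto
    have "(1 / real T) * (\<Sum>t<T. a t) - L = (1 / real T) * (\<Sum>t<T. (a t - L))"
      using Tpos by (simp add: sum_subtractf field_simps)
    also have "(\<Sum>t<T. (a t - L)) = (\<Sum>t<N. (a t - L)) + (\<Sum>t\<in>{N..<T}. (a t - L))"
      using sum.atLeastLessThan_concat[of 0 N T "\<lambda>t. a t - L"] T by (simp add: atLeast0LessThan)
    finally have eq: "(1 / real T) * (\<Sum>t<T. a t) - L = (1 / real T) * ((\<Sum>t<N. (a t - L)) + (\<Sum>t\<in>{N..<T}. (a t - L)))" .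
    have b1: "\<bar>\<Sum>t<N. (a t - L)\<bar> \<le> C" unfolding C_def by (rule sum_abs)
    have b2: "\<bar>\<Sum>t\<in>{N..<T}. (a t - L)\<bar> \<le> real T * (\<epsilon> / 2)"
    proof -
      have "\<bar>\<Sum>t\<in>{N..<T}. (a t - L)\<bar> \<le> (\<Sum>t\<in>{N..<T}. \<epsilon> / 2)"
        using N by (intro order.trans[OF sum_abs] sum_mono) (auto intro: less_imp_le)
      also have "\<dots> = real (T - N) * (\<epsilon> / 2)" by simp
      also have "\<dots> \<le> real T * (\<epsilon> / 2)" using \<epsilon> by (intro mult_right_mono) auto
      finally show ?thesis .
    qed
    have "C < real T * (\<epsilon> / 2)"
    proof -
      have "2 * C / \<epsilon> < real T" using T T0 by linarith
      then show ?thesis using \<epsilon> by (simp add: field_simps)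
    qed
    have "\<bar>(\<Sum>t<N. (a t - L)) + (\<Sum>t\<in>{N..<T}. (a t - L))\<bar> < real T * \<epsilon>"
      using b1 b2 \<open>C < _\<close> by linarith
    then show "norm ((1 / real T) * (\<Sum>t<T. a t) - L) < \<epsilon>"
      unfolding eq using Tpos by (simp add: abs_mult field_simps)
  qed
qed


definition "N00 p q a b = q * ((1 - p) * a + p * b) * (q + (1 - q) * b)"
definition "N01 p q a b = p * q * (1 - b) * (q * a + (1 - q) * b)"
definition "N10 p q a b = p * q * (1 - a) * ((1 - p) * a + p * b)"
definition "N11 p q a b = p * (q * a + (1 - q) * b) * (p + (1 - p) * a)"
definition "Z p q a b = (p + q) * (q * a + p * b + (1 - p - q) * a * b)"

lemma I0: "N00 p q a b + N01 p q a b + N10 p q a b + N11 p q a b = (Z p q a b::real)"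
  unfolding N00_def N01_def N10_def N11_def Z_def by algebra
lemma I1: "N00 p q a b = (1-p) * N00 p q a b + (1-p)*a * N01 p q a b + q * N10 p q a b + q*b * (N11 p q a b::real)"
  unfolding N00_def N01_def N10_def N11_def by algebra
lemma I2: "N01 p q a b = (1-p)*(1-a) * N01 p q a b + q*(1-b) * (N11 p q a b::real)"
  unfolding N00_def N01_def N10_def N11_def by algebra
lemma I3: "N10 p q a b = p*(1-a) * N00 p q a b + (1-q)*(1-b) * (N10 p q a b::real)"
  unfolding N00_def N01_def N10_def N11_def by algebra
lemma I4: "N11 p q a b = p*a * N00 p q a b + p * N01 p q a b + (1-q)*b * N10 p q a b + (1-q) * (N11 p q a b::real)"
  unfolding N00_def N01_def N10_def N11_def by algebra
lemma I7: "(p + q) * (N00 p q a b + N01 p q a b) = q * (Z p q a b::real)"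
  unfolding N00_def N01_def Z_def by algebra
lemma I8: "(p + q) * (N10 p q a b + N11 p q a b) = p * (Z p q a b::real)"
  unfolding N10_def N11_def Z_def by algebra
lemma Z_alt: "Z p q a b = (p + q) * (q * a * (1 - b) + p * b * (1 - a) + a * (b::real))"
  unfolding Z_def by algebra

lemma N_pos:
  fixes p q a b :: real
  assumes "0 < p" "p < 1" "0 < q" "q < 1" "0 < a" "a < 1" "0 < b" "b < 1"
  shows "0 < N00 p q a b" "0 < N01 p q a b" "0 < N10 p q a b" "0 < N11 p q a b" "0 < Z p q a b"
  using assms unfolding N00_def N01_def N10_def N11_def Z_alt
  by (intro mult_pos_pos add_pos_pos; simp)+


lemma kpow_one: "kpow K (Suc 0) i = K i"
  by (simp add: bind_return_pmf)

lemma kpow_step_lb: "pmf (kpow K n i) k * pmf (K k) j \<le> pmf (kpow K (Suc n) i) j"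
proof -
  have "ennreal (pmf (kpow K n i) k * pmf (K k) j) = (\<integral>\<^sup>+ x. ennreal (pmf (K k) j) * indicator {k} x \<partial>measure_pmf (kpow K n i))"
    by (simp add: nn_integral_cmult_indicator emeasure_pmf_single ennreal_mult mult.commute)
  also have "\<dots> \<le> (\<integral>\<^sup>+ x. ennreal (pmf (K x) j) \<partial>measure_pmf (kpow K n i))"
    by (intro nn_integral_mono) (auto simp: indicator_def)
  also have "\<dots> = ennreal (pmf (kpow K (Suc n) i) j)"
    by (simp add: ennreal_pmf_bind)
  finally show ?thesis by (simp add: ennreal_le_iff)
qed

locale model =
  fixes p q ps f0 f1 :: real
  assumes hp: "0 < p" "p < 1" and hq: "0 < q" "q < 1" and hps: "0 < ps" "ps \<le> 1"
    and hf0: "0 < f0" "f0 \<le> 1" "ps * f0 < 1" and hf1: "0 < f1" "f1 \<le> 1" "ps * f1 < 1"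
begin

abbreviation "k1 \<equiv> K1 p q ps f0 f1"
abbreviation "k2 \<equiv> K2 p q ps f0 f1"

lemma a0: "0 < ps * f0" "ps * f0 < 1" using hps hf0 by auto
lemma a1: "0 < ps * f1" "ps * f1 < 1" using hps hf1 by auto

lemma pmfK1: "pmf (k1 (x, xh)) (y, yh) =
     Psrc p q x y * ((if yh = y then aa ps f0 f1 x else 0) + (if yh = xh then 1 - aa ps f0 f1 x else 0))"
  by (rule pmf_K1) (use hp hq hps hf0 hf1 in auto)

definition g2 :: "nat \<Rightarrow> nat \<times> nat \<Rightarrow> nat \<times> nat \<times> nat" where
  "g2 d = (\<lambda>(x', xh'). (x', xh', if x' \<noteq> xh' then d + 1 else 0))"

lemma sys_step_eq: "sys_step p q ps (x, xh, d) a = map_pmf (g2 d) (est_step p q ps (x, xh) a)"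
  unfolding sys_step_def g2_def fst_conv snd_conv by (rule refl)

lemma K2_eq: "k2 (x, xh, d) = map_pmf (g2 d) (k1 (x, xh))"
  unfolding K2_def K1_def map_bind_pmf sys_step_eq fst_conv by (rule refl)

lemma inj_g2: "inj (g2 d)"
  by (auto simp: inj_def g2_def)

lemma pmfK2: "pmf (k2 (x, xh, d)) (y, yh, e) = (if e = (if y \<noteq> yh then d + 1 else 0) then pmf (k1 (x, xh)) (y, yh) else 0)"
proof (cases "e = (if y \<noteq> yh then d + 1 else 0)")
  case True
  then have "(y, yh, e) = g2 d (y, yh)" by (simp add: g2_def)
  then show ?thesis using True by (simp add: K2_eq pmf_map_inj'[OF inj_g2])
next
  case False
  then have "(y, yh, e) \<notin> g2 d ` set_pmf (k1 (x, xh))" by (auto simp: g2_def)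
  then show ?thesis using False by (simp add: K2_eq pmf_map_outside)
qed

lemma Psrc_nz: "Psrc p q x y \<noteq> 0 \<Longrightarrow> y \<in> {0, 1}"
  by (auto simp: Psrc_def split: if_splits)

lemma set_K1: "set_pmf (k1 (x, xh)) \<subseteq> {0, 1} \<times> {0, 1, xh}"
proof
  fix s assume "s \<in> set_pmf (k1 (x, xh))"
  then obtain y yh where s: "s = (y, yh)" and nz: "pmf (k1 (x, xh)) (y, yh) \<noteq> 0"
    by (cases s) (auto simp: set_pmf_iff)
  then show "s \<in> {0, 1} \<times> {0, 1, xh}"
    using Psrc_nz[of x y] by (auto simp: pmfK1 split: if_splits)
qed

lemma finite_K1: "finite (set_pmf (k1 s))"
proof (cases s)
  case (Pair x xh)
  show ?thesis unfolding Pair by (rule finite_subset[OF set_K1]) auto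
qed

lemma finite_K2: "finite (set_pmf (k2 s))"
  by (cases s) (auto simp: K2_eq finite_K1)

lemma closed_S1: assumes "s \<in> S1" shows "set_pmf (k1 s) \<subseteq> S1"
proof (cases s)
  case (Pair x xh)
  have "xh \<in> {0,1}" using assms Pair unfolding S1_def by blast
  then have "{0,1,xh} = ({0,1}::nat set)" by auto
  then show ?thesis using set_K1[of x xh] Pair by (simp add: S1_def)
qed

lemma closed_S2: "s \<in> S2 \<Longrightarrow> set_pmf (k2 s) \<subseteq> S2"
proof
  fix y assume s: "s \<in> S2" and y: "y \<in> set_pmf (k2 s)"
  obtain x xh d where sd: "s = (x, xh, d)" by (cases s) auto
  have xs: "x \<in> {0,1}" "xh \<in> {0, 1}" using s sd by (auto simp: S2_def)
  obtain y1 y2 e where yd: "y = (y1, y2, e)" by (cases y) auto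
  have nz: "pmf (k2 (x, xh, d)) (y1, y2, e) \<noteq> 0" using y by (simp add: set_pmf_iff sd yd)
  have e: "e = (if y1 \<noteq> y2 then d + 1 else 0)"
    using nz by (simp add: pmfK2 split: if_split_asm)
  have nz1: "pmf (k1 (x, xh)) (y1, y2) \<noteq> 0" using nz e by (simp add: pmfK2)
  have "(y1, y2) \<in> set_pmf (k1 (x, xh))" using nz1 by (simp add: set_pmf_iff)
  then have "y1 \<in> {0,1}" "y2 \<in> {0,1}" using set_K1[of x xh] xs by auto
  then show "y \<in> S2" using e yd by (auto simp: S2_def)
qed

definition "\<delta>0 = min ((1 - p) * (ps * f0)) (q * (ps * f1))"
definition "\<delta>1 = min (p * (ps * f0)) ((1 - q) * (ps * f1))"

lemma \<delta>0_pos: "0 < \<delta>0" using hp hq a0 a1 by (simp add: \<delta>0_def)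
lemma \<delta>1_pos: "0 < \<delta>1" using hp hq a0 a1 by (simp add: \<delta>1_def)
lemma \<delta>0_le: "\<delta>0 \<le> 1"
proof -
  have "\<delta>0 \<le> q * (ps * f1)" by (simp add: \<delta>0_def)
  moreover have "q * (ps * f1) \<le> 1" using mult_le_one[of q "ps*f1"] hq a1 by linarith
  ultimately show ?thesis by linarith
qed

end

context model begin

lemma k1_00: "pmf (k1 (x, xh)) (0, 0) = (if x = 0 then (1 - p) * (if xh = 0 then 1 else ps * f0) else q * (if xh = 0 then 1 else ps * f1))"
  by (simp add: pmfK1 Psrc_def aa_def)

lemma k1_11: "pmf (k1 (x, xh)) (1, 1) = (if x = 0 then p * (if xh = 1 then 1 else ps * f0) else (1 - q) * (if xh = 1 then 1 else ps * f1))"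
  by (simp add: pmfK1 Psrc_def aa_def)

lemma lb00: "\<delta>0 \<le> pmf (k1 (x, xh)) (0, 0)"
proof -
  have "(1-p)*(ps*f0) \<le> 1 - p" "q*(ps*f1) \<le> q" using hp hq a0 a1 by (auto intro!: mult_left_le)
  moreover have "\<delta>0 \<le> (1-p)*(ps*f0)" "\<delta>0 \<le> q*(ps*f1)" by (simp_all add: \<delta>0_def)
  ultimately have "\<delta>0 \<le> 1 - p" "\<delta>0 \<le> q" "\<delta>0 \<le> (1-p)*(ps*f0)" "\<delta>0 \<le> q*(ps*f1)" by linarith+
  then show ?thesis unfolding k1_00 by (simp split: if_split)
qed

lemma lb11: "\<delta>1 \<le> pmf (k1 (x, xh)) (1, 1)"
proof -
  have "p*(ps*f0) \<le> p" "(1-q)*(ps*f1) \<le> 1-q" using hp hq a0 a1 by (auto intro!: mult_left_le)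
  moreover have "\<delta>1 \<le> p*(ps*f0)" "\<delta>1 \<le> (1-q)*(ps*f1)" by (simp_all add: \<delta>1_def)
  ultimately have "\<delta>1 \<le> p" "\<delta>1 \<le> 1-q" "\<delta>1 \<le> p*(ps*f0)" "\<delta>1 \<le> (1-q)*(ps*f1)" by linarith+
  then show ?thesis unfolding k1_11 by (simp split: if_split)
qed

lemma lb2_000: "\<delta>0 \<le> pmf (k2 s) (0, 0, 0)"
proof (cases s)
  case (fields x xh d)
  have "pmf (k2 (x, xh, d)) (0, 0, 0) = pmf (k1 (x, xh)) (0, 0)" by (subst pmfK2) simp
  then show ?thesis using lb00 fields by simp
qed

lemma lb2_110: "\<delta>1 \<le> pmf (k2 s) (1, 1, 0)"
proof (cases s)
  case (fields x xh d)
  have "pmf (k2 (x, xh, d)) (1, 1, 0) = pmf (k1 (x, xh)) (1, 1)" by (subst pmfK2) simp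
  then show ?thesis using lb11 fields by simp
qed

lemma t1: "pmf (k2 (0, 0, 0)) (1, 0, 1) = p * (1 - ps * f0)"
  by (subst pmfK2) (simp add: pmfK1 Psrc_def aa_def)
lemma t2: "pmf (k2 (1, 0, Suc j)) (1, 0, Suc (Suc j)) = (1 - q) * (1 - ps * f1)"
  by (subst pmfK2) (simp add: pmfK1 Psrc_def aa_def)
lemma t3: "pmf (k2 (1, 1, 0)) (0, 1, 1) = q * (1 - ps * f1)"
  by (subst pmfK2) (simp add: pmfK1 Psrc_def aa_def)
lemma t4: "pmf (k2 (0, 1, Suc j)) (0, 1, Suc (Suc j)) = (1 - p) * (1 - ps * f0)"
  by (subst pmfK2) (simp add: pmfK1 Psrc_def aa_def)

lemma kpow1: "kpow k2 (Suc 0) s = k2 s" by (rule kpow_one)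

lemma reach_10: "\<delta>0 * (p * (1 - ps * f0)) * ((1 - q) * (1 - ps * f1)) ^ j \<le> pmf (kpow k2 (Suc (Suc j)) s) (1, 0, Suc j)"
proof (induction j)
  case 0
  have "\<delta>0 * (p * (1 - ps * f0)) \<le> pmf (kpow k2 (Suc 0) s) (0, 0, 0) * pmf (k2 (0, 0, 0)) (1, 0, 1)"
    unfolding t1 kpow1 using lb2_000[of s] \<delta>0_pos hp a0
    by (intro mult_right_mono) auto
  also have "\<dots> \<le> pmf (kpow k2 (Suc (Suc 0)) s) (1, 0, 1)" by (rule kpow_step_lb)
  finally show ?case by simp
next
  case (Suc j)
  have "\<delta>0 * (p * (1 - ps * f0)) * ((1 - q) * (1 - ps * f1)) ^ Suc j =
        (\<delta>0 * (p * (1 - ps * f0)) * ((1 - q) * (1 - ps * f1)) ^ j) * ((1 - q) * (1 - ps * f1))"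
    by simp
  also have "\<dots> \<le> pmf (kpow k2 (Suc (Suc j)) s) (1, 0, Suc j) * pmf (k2 (1, 0, Suc j)) (1, 0, Suc (Suc j))"
    unfolding t2 using Suc hq a1 by (intro mult_right_mono) auto
  also have "\<dots> \<le> pmf (kpow k2 (Suc (Suc (Suc j))) s) (1, 0, Suc (Suc j))" by (rule kpow_step_lb)
  finally show ?case .
qed

lemma reach_01: "\<delta>1 * (q * (1 - ps * f1)) * ((1 - p) * (1 - ps * f0)) ^ j \<le> pmf (kpow k2 (Suc (Suc j)) s) (0, 1, Suc j)"
proof (induction j)
  case 0
  have "\<delta>1 * (q * (1 - ps * f1)) \<le> pmf (kpow k2 (Suc 0) s) (1, 1, 0) * pmf (k2 (1, 1, 0)) (0, 1, 1)"
    unfolding t3 kpow1 using lb2_110[of s] \<delta>1_pos hq a1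
    by (intro mult_right_mono) auto
  also have "\<dots> \<le> pmf (kpow k2 (Suc (Suc 0)) s) (0, 1, 1)" by (rule kpow_step_lb)
  finally show ?case by simp
next
  case (Suc j)
  have "\<delta>1 * (q * (1 - ps * f1)) * ((1 - p) * (1 - ps * f0)) ^ Suc j =
        (\<delta>1 * (q * (1 - ps * f1)) * ((1 - p) * (1 - ps * f0)) ^ j) * ((1 - p) * (1 - ps * f0))"
    by simp
  also have "\<dots> \<le> pmf (kpow k2 (Suc (Suc j)) s) (0, 1, Suc j) * pmf (k2 (0, 1, Suc j)) (0, 1, Suc (Suc j))"
    unfolding t4 using Suc hp a0 by (intro mult_right_mono) auto
  also have "\<dots> \<le> pmf (kpow k2 (Suc (Suc (Suc j))) s) (0, 1, Suc (Suc j))" by (rule kpow_step_lb)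
  finally show ?case .
qed

lemma S2_cases: "z \<in> S2 \<longleftrightarrow> z = (0,0,0) \<or> z = (1,1,0) \<or> (\<exists>k. z = (1,0,Suc k)) \<or> (\<exists>k. z = (0,1,Suc k))"
proof
  assume "z \<in> S2"
  then consider "z = (0,0,0)" | "z = (1,1,0)" | d where "z = (1,0,d)" "d \<ge> 1" | d where "z = (0,1,d)" "d \<ge> 1"
    unfolding S2_def by blast
  then show "z = (0,0,0) \<or> z = (1,1,0) \<or> (\<exists>k. z = (1,0,Suc k)) \<or> (\<exists>k. z = (0,1,Suc k))"
    by cases (auto dest: Suc_le_D)
next
  assume "z = (0,0,0) \<or> z = (1,1,0) \<or> (\<exists>k. z = (1,0,Suc k)) \<or> (\<exists>k. z = (0,1,Suc k))"
  then show "z \<in> S2" unfolding S2_def by auto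
qed

lemma reach2: "z \<in> S2 \<Longrightarrow> \<exists>M \<epsilon>. 0 < \<epsilon> \<and> (\<forall>s. \<epsilon> \<le> pmf (kpow k2 (Suc M) s) z)"
proof -
  assume z: "z \<in> S2"
  have r1: "0 < (1 - q) * (1 - ps * f1)" "0 < (1 - p) * (1 - ps * f0)" "0 < p * (1 - ps * f0)" "0 < q * (1 - ps * f1)"
    using hp hq a0 a1 by auto
  from z consider "z = (0,0,0)" | "z = (1,1,0)" | k where "z = (1,0,Suc k)" | k where "z = (0,1,Suc k)"
    unfolding S2_cases by blast
  then show ?thesis
  proof cases
    case 1
    have "\<forall>s. \<delta>0 \<le> pmf (kpow k2 (Suc 0) s) z" using 1 lb2_000 by (simp add: bind_return_pmf)
    then show ?thesis using \<delta>0_pos by blast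
  next
    case 2
    have "\<forall>s. \<delta>1 \<le> pmf (kpow k2 (Suc 0) s) z" using 2 lb2_110 by (simp add: bind_return_pmf)
    then show ?thesis using \<delta>1_pos by blast
  next
    case (3 k)
    show ?thesis using reach_10[of k] \<delta>0_pos r1 3
      by (intro exI[of _ "Suc k"] exI[of _ "\<delta>0 * (p * (1 - ps * f0)) * ((1 - q) * (1 - ps * f1)) ^ k"]) auto
  next
    case (4 k)
    show ?thesis using reach_01[of k] \<delta>1_pos r1 4
      by (intro exI[of _ "Suc k"] exI[of _ "\<delta>1 * (q * (1 - ps * f1)) * ((1 - p) * (1 - ps * f0)) ^ k"]) auto
  qed
qed

end

context model begin

abbreviation "A0 \<equiv> ps * f0"
abbreviation "A1 \<equiv> ps * f1"
definition "zz = Z p q A0 A1"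
definition "n00 = nu00 p q A0 A1"
definition "n01 = nu01 p q A0 A1"
definition "n10 = nu10 p q A0 A1"
definition "n11 = nu11 p q A0 A1"

lemma n_defs: "n00 = N00 p q A0 A1 / zz" "n01 = N01 p q A0 A1 / zz" "n10 = N10 p q A0 A1 / zz" "n11 = N11 p q A0 A1 / zz"
  by (simp_all add: n00_def n01_def n10_def n11_def nu00_def nu01_def nu10_def nu11_def zeta_def
      N00_def N01_def N10_def N11_def Z_def zz_def)

lemma Npos: "0 < N00 p q A0 A1" "0 < N01 p q A0 A1" "0 < N10 p q A0 A1" "0 < N11 p q A0 A1" "0 < zz"
  using N_pos[of p q A0 A1] hp hq a0 a1 by (auto simp: zz_def)

lemma n_pos: "0 < n00" "0 < n01" "0 < n10" "0 < n11"
  using Npos by (simp_all add: n_defs)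

lemma n_sum: "n00 + n01 + n10 + n11 = 1"
  using Npos I0[of p q A0 A1] unfolding n_defs zz_def by (simp add: add_divide_distrib[symmetric])

definition "nlist = [((0::nat, 0::nat), n00), ((0, 1), n01), ((1, 0), n10), ((1, 1), n11)]"
definition "nu1 = pmf_of_list nlist"

lemma nlist_wf: "pmf_of_list_wf nlist"
  using n_pos n_sum by (auto simp: pmf_of_list_wf_def nlist_def)

lemma pmf_nu1: "pmf nu1 (0,0) = n00" "pmf nu1 (0,1) = n01" "pmf nu1 (1,0) = n10" "pmf nu1 (1,1) = n11"
  by (simp_all only: nu1_def pmf_pmf_of_list[OF nlist_wf]) (simp_all add: nlist_def)

lemma set_nu1: "set_pmf nu1 \<subseteq> S1"
  using set_pmf_of_list[OF nlist_wf] by (auto simp: nu1_def nlist_def S1_def)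

lemma S1_eq: "S1 = {(0,0), (0,1), (1,0), (1,1)}" by (auto simp: S1_def)

lemma pmf_bind_S1: "set_pmf M \<subseteq> S1 \<Longrightarrow> pmf (bind_pmf M k1) y = (\<Sum>s\<in>S1. pmf M s * pmf (k1 s) y)"
  unfolding pmf_bind
  by (subst integral_measure_pmf_real[where A=S1]) (auto simp: S1_eq mult.commute)

lemma sum_S1: "(\<Sum>s\<in>S1. f s) = f (0,0) + f (0,1) + f (1,0) + f (1,1)"
  by (simp add: S1_eq add.assoc)

lemma k1_vals:
  "pmf (k1 (0,0)) (0,0) = 1 - p" "pmf (k1 (0,1)) (0,0) = (1-p)*A0" "pmf (k1 (1,0)) (0,0) = q" "pmf (k1 (1,1)) (0,0) = q * A1"
  "pmf (k1 (0,0)) (0,1) = 0" "pmf (k1 (0,1)) (0,1) = (1-p)*(1-A0)" "pmf (k1 (1,0)) (0,1) = 0" "pmf (k1 (1,1)) (0,1) = q * (1-A1)"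
  "pmf (k1 (0,0)) (1,0) = p*(1-A0)" "pmf (k1 (0,1)) (1,0) = 0" "pmf (k1 (1,0)) (1,0) = (1-q)*(1-A1)" "pmf (k1 (1,1)) (1,0) = 0"
  "pmf (k1 (0,0)) (1,1) = p*A0" "pmf (k1 (0,1)) (1,1) = p" "pmf (k1 (1,0)) (1,1) = (1-q)*A1" "pmf (k1 (1,1)) (1,1) = 1-q"
  by (simp_all add: pmfK1 Psrc_def aa_def)

lemma sum4_div: "(a::real)/z*c + b/z*d + e/z*f + g/z*h = (c*a + d*b + f*e + h*g)/z"
  by (simp add: add_divide_distrib mult.commute)

lemma stat1_vals:
  "(\<Sum>s\<in>S1. pmf nu1 s * pmf (k1 s) (0,0)) = n00"
  "(\<Sum>s\<in>S1. pmf nu1 s * pmf (k1 s) (0,1)) = n01"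
  "(\<Sum>s\<in>S1. pmf nu1 s * pmf (k1 s) (1,0)) = n10"
  "(\<Sum>s\<in>S1. pmf nu1 s * pmf (k1 s) (1,1)) = n11"
  unfolding sum_S1 pmf_nu1 k1_vals n_defs sum4_div
  by (simp_all only: mult_zero_left add_0_left add_0_right I1[symmetric] I2[symmetric] I3[symmetric] I4[symmetric])

lemma stat1: "bind_pmf nu1 k1 = nu1"
proof (rule pmf_eqI)
  fix y :: "nat \<times> nat"
  show "pmf (bind_pmf nu1 k1) y = pmf nu1 y"
  proof (cases "y \<in> S1")
    case True
    then have "y = (0,0) \<or> y = (0,1) \<or> y = (1,0) \<or> y = (1,1)" unfolding S1_eq by blast
    then show ?thesis
      by (elim disjE) (simp_all only: pmf_bind_S1[OF set_nu1] stat1_vals pmf_nu1)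
  next
    case False
    have "y \<notin> set_pmf (bind_pmf nu1 k1)" using False set_nu1 closed_S1 by auto
    moreover have "y \<notin> set_pmf nu1" using False set_nu1 by auto
    ultimately show ?thesis by (metis pmf_eq_0_set_pmf)
  qed
qed

end


lemma irr_pr_from_reach:
  assumes cl: "closed_on K S"
    and r: "\<And>z. z \<in> S \<Longrightarrow> \<exists>M \<epsilon>. 0 < \<epsilon> \<and> (\<forall>s. \<epsilon> \<le> pmf (kpow K (Suc M) s) z)"
  shows "irreducible_on K S" "positive_recurrent_on K S"
proof -
  show "irreducible_on K S" unfolding irreducible_on_def
  proof (intro conjI cl ballI)
    fix i j assume "i \<in> S" "j \<in> S"
    from r[OF \<open>j \<in> S\<close>] obtain M \<epsilon> where "0 < \<epsilon>" "\<forall>s. \<epsilon> \<le> pmf (kpow K (Suc M) s) j" by blast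
    then have "0 < pmf (kpow K (Suc M) i) j" by (meson less_le_trans)
    then show "\<exists>n. 0 < pmf (kpow K n i) j" by blast
  qed
  show "positive_recurrent_on K S" unfolding positive_recurrent_on_def
  proof
    fix i assume "i \<in> S"
    from r[OF this] obtain M \<epsilon> where "0 < \<epsilon>" "\<forall>s. \<epsilon> \<le> pmf (kpow K (Suc M) s) i" by blast
    then show "passage_time K i i < \<infinity>"
      by (intro passage_time_finite[of \<epsilon> K M i]) (auto intro: ennreal_leI)
  qed
qed

lemma integral_single:
  fixes f :: "'a \<Rightarrow> real"
  assumes "\<And>s. s \<in> set_pmf M \<Longrightarrow> s \<noteq> a \<Longrightarrow> f s = 0"
  shows "measure_pmf.expectation M f = f a * pmf M a"
  using assms by (subst integral_measure_pmf_real[where A="{a}"]) auto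

lemma pmf_map_unique:
  assumes "\<And>y. y \<in> set_pmf M \<Longrightarrow> f y = f x \<Longrightarrow> y = x"
  shows "pmf (map_pmf f M) (f x) = pmf M x"
proof -
  have "pmf (map_pmf f M) (f x) = measure M (f -` {f x})" by (rule pmf_map)
  also have "\<dots> = measure M (f -` {f x} \<inter> set_pmf M)" by (simp add: measure_Int_set_pmf)
  also have "f -` {f x} \<inter> set_pmf M = {x} \<inter> set_pmf M" using assms by auto
  also have "measure M \<dots> = measure M {x}" by (simp add: measure_Int_set_pmf)
  finally show ?thesis by (simp add: measure_pmf_single)
qed

context model begin

lemma k1_self_pos: "s \<in> S1 \<Longrightarrow> 0 < pmf (k1 s) s"
proof -
  have "0 < pmf (k1 (0,0)) (0,0)" "0 < pmf (k1 (0,1)) (0,1)" "0 < pmf (k1 (1,0)) (1,0)" "0 < pmf (k1 (1,1)) (1,1)"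
    unfolding k1_vals using hp hq a0 a1 by simp_all
  moreover assume "s \<in> S1"
  then have "s = (0,0) \<or> s = (0,1) \<or> s = (1,0) \<or> s = (1,1)" unfolding S1_eq by blast
  ultimately show ?thesis by blast
qed

lemma lb00': "\<delta>0 \<le> pmf (k1 s) (0,0)" by (cases s) (simp only: lb00)
lemma lb11': "\<delta>1 \<le> pmf (k1 s) (1,1)" by (cases s) (simp only: lb11)

lemma aperiodic1: "aperiodic_on k1 S1"
  unfolding aperiodic_on_def
proof
  fix i assume "i \<in> S1"
  then have "1 \<in> {n. n > 0 \<and> pmf (kpow k1 n i) i > 0}"
    using k1_self_pos by (simp add: bind_return_pmf)
  then have "Gcd {n. n > 0 \<and> pmf (kpow k1 n i) i > 0} dvd 1" by (rule Gcd_dvd)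
  then show "Gcd {n. n > 0 \<and> pmf (kpow k1 n i) i > 0} = 1" by simp
qed

lemma reach1: "z \<in> S1 \<Longrightarrow> \<exists>M \<epsilon>. 0 < \<epsilon> \<and> (\<forall>s. \<epsilon> \<le> pmf (kpow k1 (Suc M) s) z)"
proof -
  assume z: "z \<in> S1"
  have kp1: "kpow k1 (Suc 0) s = k1 s" for s by (rule kpow_one)
  have r1: "0 < p * (1 - A0)" "0 < q * (1 - A1)" using hp hq a0 a1 by auto
  from z consider "z = (0,0)" | "z = (1,1)" | "z = (1,0)" | "z = (0,1)" unfolding S1_eq by blast
  then show ?thesis
  proof cases
    case 1
    have "\<forall>s. \<delta>0 \<le> pmf (kpow k1 (Suc 0) s) z" unfolding kp1 using 1 lb00' by simp
    then show ?thesis using \<delta>0_pos by blast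
  next
    case 2
    have "\<forall>s. \<delta>1 \<le> pmf (kpow k1 (Suc 0) s) z" unfolding kp1 using 2 lb11' by simp
    then show ?thesis using \<delta>1_pos by blast
  next
    case 3
    have "\<delta>0 * (p * (1 - A0)) \<le> pmf (kpow k1 (Suc (Suc 0)) s) z" for s
    proof -
      obtain x xh where s: "s = (x, xh)" by (cases s)
      have "\<delta>0 * (p * (1 - A0)) \<le> pmf (kpow k1 (Suc 0) s) (0, 0) * pmf (k1 (0, 0)) (1, 0)"
        unfolding kp1 k1_vals using lb00' r1 \<delta>0_pos by (intro mult_right_mono) auto
      also have "\<dots> \<le> pmf (kpow k1 (Suc (Suc 0)) s) (1, 0)" by (rule kpow_step_lb)
      finally show ?thesis using 3 by simp
    qed
    then show ?thesis using \<delta>0_pos r1 by (intro exI[of _ "Suc 0"] exI[of _ "\<delta>0 * (p * (1 - A0))"]) auto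
  next
    case 4
    have "\<delta>1 * (q * (1 - A1)) \<le> pmf (kpow k1 (Suc (Suc 0)) s) z" for s
    proof -
      obtain x xh where s: "s = (x, xh)" by (cases s)
      have "\<delta>1 * (q * (1 - A1)) \<le> pmf (kpow k1 (Suc 0) s) (1, 1) * pmf (k1 (1, 1)) (0, 1)"
        unfolding kp1 k1_vals using lb11' r1 \<delta>1_pos by (intro mult_right_mono) auto
      also have "\<dots> \<le> pmf (kpow k1 (Suc (Suc 0)) s) (0, 1)" by (rule kpow_step_lb)
      finally show ?thesis using 4 by simp
    qed
    then show ?thesis using \<delta>1_pos r1 by (intro exI[of _ "Suc 0"] exI[of _ "\<delta>1 * (q * (1 - A1))"]) auto
  qed
qed

lemma ergodic1: "ergodic_on k1 S1"
  unfolding ergodic_on_def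
  using irr_pr_from_reach[of k1 S1] closed_S1 reach1 aperiodic1 by (auto simp: closed_on_def)

lemma mc2_irr_pr: "irreducible_on k2 S2" "positive_recurrent_on k2 S2"
  using irr_pr_from_reach[of k2 S2] closed_S2 reach2 by (auto simp: closed_on_def)

end

context model begin

definition th :: "nat \<Rightarrow> real" where
  "th x = (if x = 0 then 1 - (1 - p) * (1 - A0) else 1 - (1 - q) * (1 - A1))"

lemma th_bnd: "0 < th x" "th x \<le> 1"
proof -
  have "(1 - p) * (1 - A0) \<le> 1 - p" "(1 - q) * (1 - A1) \<le> 1 - q"
    using hp hq a0 a1 by (auto intro!: mult_left_le)
  moreover have "0 < (1 - p) * (1 - A0)" "0 < (1 - q) * (1 - A1)"
    using hp hq a0 a1 by auto
  ultimately have "0 < (1 - p) * (1 - A0)" "(1 - p) * (1 - A0) < 1" "0 < (1 - q) * (1 - A1)" "(1 - q) * (1 - A1) < 1"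
    using hp hq by linarith+
  then show "0 < th x" "th x \<le> 1" by (auto simp: th_def)
qed

definition G :: "nat \<times> nat \<Rightarrow> (nat \<times> nat \<times> nat) pmf" where
  "G s = (if fst s = snd s then return_pmf (fst s, snd s, 0)
          else map_pmf (\<lambda>k. (fst s, snd s, Suc k)) (geometric_pmf (th (fst s))))"

definition "nu2 = bind_pmf nu1 G"

definition pr :: "nat \<times> nat \<times> nat \<Rightarrow> nat \<times> nat" where "pr s = (fst s, fst (snd s))"

lemma map_pr_G: "map_pmf pr (G s) = return_pmf s"
  by (cases s) (auto simp: G_def pr_def map_pmf_comp)

lemma map_pr_nu2: "map_pmf pr nu2 = nu1"
  by (simp add: nu2_def map_bind_pmf map_pr_G bind_return_pmf')

lemma map_pr_k2: "map_pmf pr (k2 s) = k1 (pr s)"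
proof (cases s)
  case (fields x xh d)
  have "pr \<circ> g2 d = id" by (auto simp: pr_def g2_def)
  then have "map_pmf pr (map_pmf (g2 d) M) = M" for M
    by (simp add: map_pmf_comp o_def[symmetric] del: o_apply)
  then show ?thesis by (simp add: fields K2_eq pr_def)
qed

lemma pmf_G_other: "(y1, y2) \<noteq> s \<Longrightarrow> pmf (G s) (y1, y2, e) = 0"
  by (cases s) (auto simp: G_def pmf_eq_0_set_pmf)

lemma pmf_nu2_gen: "pmf nu2 (y1, y2, e) = pmf nu1 (y1, y2) * pmf (G (y1, y2)) (y1, y2, e)"
  unfolding nu2_def pmf_bind
  by (subst integral_single[where a="(y1, y2)"]) (auto simp: pmf_G_other mult.commute)

lemma pmf_G_same: "pmf (G (x, x)) (x, x, e) = (if e = 0 then 1 else 0)"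
  by (simp add: G_def)

lemma pmf_G_diff: "x \<noteq> xh \<Longrightarrow> pmf (G (x, xh)) (x, xh, Suc k) = (1 - th x) ^ k * th x"
proof -
  assume "x \<noteq> xh"
  have "inj (\<lambda>k. (x, xh, Suc k))" by (auto simp: inj_def)
  from pmf_map_inj'[OF this, of "geometric_pmf (th x)" k]
  show ?thesis using \<open>x \<noteq> xh\<close> th_bnd[of x] by (simp add: G_def)
qed

lemma pmf_G_diff0: "x \<noteq> xh \<Longrightarrow> pmf (G (x, xh)) (x, xh, 0) = 0"
  by (auto simp: G_def pmf_eq_0_set_pmf)

lemma th_rel: "n10 * th 1 = p * (1 - A0) * n00" "n01 * th 0 = q * (1 - A1) * n11"
proof -
  have z: "zz \<noteq> 0" using Npos by simp
  have "N10 p q A0 A1 * th 1 = p * (1 - A0) * N00 p q A0 A1"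
    using I3[of p q A0 A1] by (simp add: th_def algebra_simps)
  then show "n10 * th 1 = p * (1 - A0) * n00" by (simp add: n_defs)
  have "N01 p q A0 A1 * th 0 = q * (1 - A1) * N11 p q A0 A1"
    using I2[of p q A0 A1] by (simp add: th_def algebra_simps)
  then show "n01 * th 0 = q * (1 - A1) * n11" by (simp add: n_defs)
qed

lemma pmf_nu2:
  "pmf nu2 (0, 0, 0) = n00" "pmf nu2 (1, 1, 0) = n11"
  "pmf nu2 (1, 0, Suc k) = p * (1 - A0) * ((1 - q) * (1 - A1)) ^ k * n00"
  "pmf nu2 (0, 1, Suc k) = q * (1 - A1) * ((1 - p) * (1 - A0)) ^ k * n11"
proof -
  show "pmf nu2 (0, 0, 0) = n00" "pmf nu2 (1, 1, 0) = n11"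
    by (simp_all only: pmf_nu2_gen pmf_G_same pmf_nu1) simp_all
  have gd: "pmf (G (1,0)) (1,0,Suc k) = (1 - th 1)^k * th 1" by (rule pmf_G_diff) simp
  have "pmf nu2 (1, 0, Suc k) = n10 * ((1 - th 1) ^ k * th 1)"
    by (simp only: pmf_nu2_gen pmf_nu1 gd)
  also have "\<dots> = (n10 * th 1) * (1 - th 1) ^ k" by simp
  finally show "pmf nu2 (1, 0, Suc k) = p * (1 - A0) * ((1 - q) * (1 - A1)) ^ k * n00"
    unfolding th_rel by (simp add: th_def)
  have gd': "pmf (G (0,1)) (0,1,Suc k) = (1 - th 0)^k * th 0" by (rule pmf_G_diff) simp
  have "pmf nu2 (0, 1, Suc k) = n01 * ((1 - th 0) ^ k * th 0)"
    by (simp only: pmf_nu2_gen pmf_nu1 gd')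
  also have "\<dots> = (n01 * th 0) * (1 - th 0) ^ k" by simp
  finally show "pmf nu2 (0, 1, Suc k) = q * (1 - A1) * ((1 - p) * (1 - A0)) ^ k * n11"
    unfolding th_rel by (simp add: th_def)
qed

lemma set_nu2: "set_pmf nu2 \<subseteq> S2"
proof
  fix y assume y: "y \<in> set_pmf nu2"
  then obtain s where s: "s \<in> set_pmf nu1" "y \<in> set_pmf (G s)" by (auto simp: nu2_def)
  then have "s \<in> S1" using set_nu1 by auto
  then show "y \<in> S2" using s(2) by (auto simp: G_def S1_def S2_def split: if_splits)
qed

end

context model begin

lemma pmfK2_10: "pmf (k2 (x, xh, d)) (1, 0, Suc k) = (if d = k \<and> xh = 0 then Psrc p q x 1 * (1 - aa ps f0 f1 x) else 0)"
  by (subst pmfK2) (simp add: pmfK1)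

lemma pmfK2_01: "pmf (k2 (x, xh, d)) (0, 1, Suc k) = (if d = k \<and> xh = 1 then Psrc p q x 0 * (1 - aa ps f0 f1 x) else 0)"
  by (subst pmfK2) (simp add: pmfK1)

lemma set_bind_nu2: "set_pmf (bind_pmf nu2 k2) \<subseteq> S2"
  using set_nu2 closed_S2 by fastforce

lemma bind_nu2_proj: "map_pmf pr (bind_pmf nu2 k2) = nu1"
proof -
  have "map_pmf pr (bind_pmf nu2 k2) = bind_pmf nu2 (\<lambda>s. k1 (pr s))"
    by (simp add: map_bind_pmf map_pr_k2)
  also have "\<dots> = bind_pmf (map_pmf pr nu2) k1" by (simp add: bind_map_pmf)
  also have "\<dots> = nu1" by (simp add: map_pr_nu2 stat1)
  finally show ?thesis .
qed

lemma pr_unique: "y \<in> S2 \<Longrightarrow> pr y = (x, x) \<Longrightarrow> y = (x, x, 0)"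
  unfolding S2_cases by (auto simp: pr_def)

lemma stat2: "bind_pmf nu2 k2 = nu2"
proof (rule pmf_eqI)
  fix y :: "nat \<times> nat \<times> nat"
  show "pmf (bind_pmf nu2 k2) y = pmf nu2 y"
  proof (cases "y \<in> S2")
    case False
    have "y \<notin> set_pmf (bind_pmf nu2 k2)" using False set_bind_nu2 by auto
    moreover have "y \<notin> set_pmf nu2" using False set_nu2 by auto
    ultimately show ?thesis by (metis pmf_eq_0_set_pmf)
  next
    case True
    have diag: "pmf (bind_pmf nu2 k2) (x, x, 0) = pmf nu1 (x, x)" for x
    proof -
      have "pmf (bind_pmf nu2 k2) (x, x, 0) = pmf (map_pmf pr (bind_pmf nu2 k2)) (pr (x, x, 0))"
        by (rule pmf_map_unique[symmetric]) (use set_bind_nu2 pr_unique in \<open>auto simp: pr_def\<close>)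
      also have "\<dots> = pmf nu1 (x, x)" by (simp add: bind_nu2_proj pr_def)
      finally show ?thesis .
    qed
    have pb: "pmf (bind_pmf nu2 k2) y = measure_pmf.expectation nu2 (\<lambda>s. pmf (k2 s) y)"
      by (rule pmf_bind)
    from True consider "y = (0,0,0)" | "y = (1,1,0)" | k where "y = (1,0,Suc k)" | k where "y = (0,1,Suc k)"
      unfolding S2_cases by blast
    then show ?thesis
    proof cases
      case 1 then show ?thesis using diag[of 0] by (simp add: pmf_nu2 pmf_nu1)
    next
      case 2 show ?thesis unfolding 2 diag pmf_nu1 pmf_nu2 by (rule refl)
    next
      case (3 k)
      define pd where "pd = (if k = 0 then (0::nat,0::nat,0::nat) else (1,0,k))"
      have z: "pmf (k2 s) y = 0" if "s \<in> set_pmf nu2" "s \<noteq> pd" for s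
      proof -
        obtain x xh d where s: "s = (x, xh, d)" by (cases s)
        have "s \<in> S2" using that set_nu2 by auto
        then have nc: "\<not> (d = k \<and> xh = 0)" using that(2) unfolding s S2_cases pd_def by auto
        show ?thesis unfolding 3 s pmfK2_10 by (simp only: nc if_False)
      qed
      have "pmf (bind_pmf nu2 k2) y = pmf (k2 pd) y * pmf nu2 pd"
        unfolding pb by (rule integral_single) (use z in auto)
      also have "\<dots> = pmf nu2 y"
      proof (cases k)
        case 0 then show ?thesis using 3 t1 using pmf_nu2 by (simp add: pd_def)
      next
        case (Suc j)
        then show ?thesis using 3 t2[of j] using pmf_nu2 by (simp add: pd_def)
      qed
      finally show ?thesis .
    next
      case (4 k)
      define pd where "pd = (if k = 0 then (1::nat,1::nat,0::nat) else (0,1,k))"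
      have z: "pmf (k2 s) y = 0" if "s \<in> set_pmf nu2" "s \<noteq> pd" for s
      proof -
        obtain x xh d where s: "s = (x, xh, d)" by (cases s)
        have "s \<in> S2" using that set_nu2 by auto
        then have nc: "\<not> (d = k \<and> xh = 1)" using that(2) unfolding s S2_cases pd_def by auto
        show ?thesis unfolding 4 s pmfK2_01 by (simp only: nc if_False)
      qed
      have "pmf (bind_pmf nu2 k2) y = pmf (k2 pd) y * pmf nu2 pd"
        unfolding pb by (rule integral_single) (use z in auto)
      also have "\<dots> = pmf nu2 y"
      proof (cases k)
        case 0 then show ?thesis using 4 t3 using pmf_nu2 by (simp add: pd_def)
      next
        case (Suc j)
        then show ?thesis using 4 t4[of j] using pmf_nu2 by (simp add: pd_def)
      qed
      finally show ?thesis .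
    qed
  qed
qed

end


lemma integral_bind_fin:
  fixes f :: "'b \<Rightarrow> real"
  assumes fin: "finite (set_pmf M)" "\<And>x. x \<in> set_pmf M \<Longrightarrow> finite (set_pmf (N x))"
  shows "measure_pmf.expectation (bind_pmf M N) f = measure_pmf.expectation M (\<lambda>x. measure_pmf.expectation (N x) f)"
proof -
  define A where "A = set_pmf M"
  define B where "B = set_pmf (bind_pmf M N)"
  have fA: "finite A" using fin by (simp add: A_def)
  have fB: "finite B" unfolding B_def set_bind_pmf by (rule finite_UN_I) (use fin in auto)
  have NB: "x \<in> A \<Longrightarrow> set_pmf (N x) \<subseteq> B" for x by (auto simp: A_def B_def)
  have "measure_pmf.expectation (bind_pmf M N) f = (\<Sum>y\<in>B. f y * pmf (bind_pmf M N) y)"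
    by (rule integral_measure_pmf_real[OF fB]) (auto simp: B_def)
  also have "\<dots> = (\<Sum>y\<in>B. f y * (\<Sum>x\<in>A. pmf (N x) y * pmf M x))"
    unfolding pmf_bind by (intro sum.cong refl arg_cong2[where f="(*)"] integral_measure_pmf_real) (use fin in \<open>auto simp: A_def\<close>)
  also have "\<dots> = (\<Sum>x\<in>A. (\<Sum>y\<in>B. f y * pmf (N x) y) * pmf M x)"
    by (simp add: sum_distrib_left sum_distrib_right mult.assoc sum.swap[of _ B])
  also have "\<dots> = (\<Sum>x\<in>A. measure_pmf.expectation (N x) f * pmf M x)"
    by (intro sum.cong refl arg_cong2[where f="(*)"] integral_measure_pmf_real[symmetric]) (use fB NB in auto)
  also have "\<dots> = measure_pmf.expectation M (\<lambda>x. measure_pmf.expectation (N x) f)"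
    by (rule integral_measure_pmf_real[symmetric]) (use fin in \<open>auto simp: A_def\<close>)
  finally show ?thesis .
qed

lemma pmf_two_le: "a \<noteq> b \<Longrightarrow> pmf M a + pmf M b \<le> 1"
  using measure_measure_pmf_finite[of "{a, b}" M] measure_pmf.prob_le_1[of M "{a,b}"] by simp

context model begin

definition h10 :: "nat \<times> nat \<times> nat \<Rightarrow> real" where
  "h10 s = (if fst s = 1 \<and> fst (snd s) = 0 then real (snd (snd s)) else 0)"
definition h01 :: "nat \<times> nat \<times> nat \<Rightarrow> real" where
  "h01 s = (if fst s = 0 \<and> fst (snd s) = 1 then real (snd (snd s)) else 0)"

lemma cst_eq: "cst \<beta> = (\<lambda>s. \<beta> * h10 s + (1 - \<beta>) * h01 s)"
  by (auto simp: cst_def h10_def h01_def fun_eq_iff)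

lemma fin_act: "finite (set_pmf (act f0 f1 x))"
  by (simp add: act_def)

lemma fin_sys: "finite (set_pmf (sys_step p q ps (x, xh, d) a))"
proof -
  have "finite (set_pmf (est_step p q ps (x, xh) a))"
    unfolding est_step_def src_def by auto
  then show ?thesis by (simp add: sys_step_eq)
qed

lemma esc_eq: "exp_stage_cost p q ps f0 f1 \<beta> lam s =
   measure_pmf.expectation (k2 s) (cst \<beta>) + lam * (if fst s = 0 then f0 else f1)"
proof -
  obtain x xh d where s: "s = (x, xh, d)" by (cases s)
  define f where "f = (if x = 0 then f0 else f1)"
  have f: "0 \<le> f" "f \<le> 1" using hf0 hf1 by (auto simp: f_def)
  have act: "act f0 f1 x = bernoulli_pmf f" by (simp add: act_def f_def)
  have "measure_pmf.expectation (k2 s) (cst \<beta>) =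
        measure_pmf.expectation (act f0 f1 x) (\<lambda>a. measure_pmf.expectation (sys_step p q ps s a) (cst \<beta>))"
    unfolding K2_def s fst_conv by (rule integral_bind_fin) (auto simp: fin_act fin_sys)
  also have "\<dots> = measure_pmf.expectation (sys_step p q ps s True) (cst \<beta>) * f +
                  measure_pmf.expectation (sys_step p q ps s False) (cst \<beta>) * (1 - f)"
    unfolding act using f by simp
  finally show ?thesis
    unfolding exp_stage_cost_def stage_cost_def s fst_conv act using f
    by (simp add: f_def[symmetric] algebra_simps)
qed

lemma Eh10: "measure_pmf.expectation (k2 (x, xh, d)) h10 = real (d + 1) * pmf (k1 (x, xh)) (1, 0)"
proof -
  have "measure_pmf.expectation (k2 (x, xh, d)) h10 = measure_pmf.expectation (k1 (x, xh)) (\<lambda>v. h10 (g2 d v))"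
    by (simp add: K2_eq)
  also have "\<dots> = h10 (g2 d (1, 0)) * pmf (k1 (x, xh)) (1, 0)"
    by (rule integral_single) (auto simp: h10_def g2_def)
  finally show ?thesis by (simp add: h10_def g2_def)
qed

lemma Eh01: "measure_pmf.expectation (k2 (x, xh, d)) h01 = real (d + 1) * pmf (k1 (x, xh)) (0, 1)"
proof -
  have "measure_pmf.expectation (k2 (x, xh, d)) h01 = measure_pmf.expectation (k1 (x, xh)) (\<lambda>v. h01 (g2 d v))"
    by (simp add: K2_eq)
  also have "\<dots> = h01 (g2 d (0, 1)) * pmf (k1 (x, xh)) (0, 1)"
    by (rule integral_single) (auto simp: h01_def g2_def)
  finally show ?thesis by (simp add: h01_def g2_def)
qed

lemma fin_k2_int: "integrable (measure_pmf (k2 s)) (f :: _ \<Rightarrow> real)"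
  by (rule integrable_measure_pmf_finite[OF finite_K2])

lemma Ecst: "measure_pmf.expectation (k2 s) (cst \<beta>) =
    \<beta> * measure_pmf.expectation (k2 s) h10 + (1 - \<beta>) * measure_pmf.expectation (k2 s) h01"
  unfolding cst_eq by (simp add: fin_k2_int)

end

context model begin

lemma set_K2_age: "y \<in> set_pmf (k2 (x, xh, d)) \<Longrightarrow> snd (snd y) \<le> d + 1"
  by (auto simp: K2_eq g2_def)

lemma Ecst_explicit: "measure_pmf.expectation (k2 (x, xh, d)) (cst \<beta>) =
   \<beta> * (real (d + 1) * pmf (k1 (x, xh)) (1, 0)) + (1 - \<beta>) * (real (d + 1) * pmf (k1 (x, xh)) (0, 1))"
  by (simp only: Ecst Eh10 Eh01)

lemma esc_bounds:
  assumes "0 \<le> \<beta>" "\<beta> \<le> 1" "0 \<le> lam"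
  shows "0 \<le> exp_stage_cost p q ps f0 f1 \<beta> lam (x, xh, d)"
    "exp_stage_cost p q ps f0 f1 \<beta> lam (x, xh, d) \<le> real d + 1 + lam"
proof -
  define K10 where "K10 = pmf (k1 (x, xh)) (1, 0)"
  define K01 where "K01 = pmf (k1 (x, xh)) (0, 1)"
  define f where "f = (if x = 0 then f0 else f1)"
  have K: "0 \<le> K10" "0 \<le> K01" "K10 + K01 \<le> 1" by (auto simp: K10_def K01_def intro: pmf_two_le)
  have f: "0 \<le> f" "f \<le> 1" using hf0 hf1 by (auto simp: f_def)
  have e: "exp_stage_cost p q ps f0 f1 \<beta> lam (x, xh, d) = \<beta> * (real (d + 1) * K10) + (1 - \<beta>) * (real (d + 1) * K01) + lam * f"
    by (simp only: esc_eq Ecst_explicit K10_def K01_def f_def fst_conv)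
  have "0 \<le> \<beta> * (real (d + 1) * K10)" "0 \<le> (1 - \<beta>) * (real (d + 1) * K01)" "0 \<le> lam * f"
    using assms K f by simp_all
  then show "0 \<le> exp_stage_cost p q ps f0 f1 \<beta> lam (x, xh, d)" unfolding e by linarith
  have "\<beta> * K10 + (1 - \<beta>) * K01 \<le> 1"
  proof -
    have "\<beta> * K10 \<le> K10" "(1 - \<beta>) * K01 \<le> K01" using assms K by (auto intro!: mult_left_le_one_le)
    then show ?thesis using K by linarith
  qed
  then have "real (d + 1) * (\<beta> * K10 + (1 - \<beta>) * K01) \<le> real (d + 1) * 1"
    by (intro mult_left_mono) auto
  moreover have "lam * f \<le> lam" using assms f by (simp add: mult_left_le)
  ultimately show "exp_stage_cost p q ps f0 f1 \<beta> lam (x, xh, d) \<le> real d + 1 + lam"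
    unfolding e by (simp add: algebra_simps)
qed

lemma passage_time_000: "passage_time k2 (0, 0, 0) i < \<infinity>"
  by (rule passage_time_finite[of \<delta>0 _ 0]) (use lb2_000 \<delta>0_pos in \<open>auto simp: bind_return_pmf intro: ennreal_leI\<close>)

lemma passage_cost_000:
  assumes "0 \<le> \<beta>" "\<beta> \<le> 1" "0 \<le> lam"
  shows "passage_cost k2 (0, 0, 0) (\<lambda>s. ennreal (exp_stage_cost p q ps f0 f1 \<beta> lam s)) i < \<infinity>"
proof -
  define \<delta> where "\<delta> = \<delta>0"
  have d: "0 < \<delta>" "\<delta> \<le> 1" using \<delta>0_pos \<delta>0_le by (auto simp: \<delta>_def)
  define B where "B = 1 / \<delta>"
  define A where "A = (1 + lam + (1 - \<delta>) * B) / \<delta>"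
  have B: "0 \<le> B" using d by (simp add: B_def)
  have A: "0 \<le> A" using d assms B by (simp add: A_def)
  define V where "V s = ennreal (A + B * real (snd (snd s)))" for s :: "nat \<times> nat \<times> nat"
  have key: "ennreal (exp_stage_cost p q ps f0 f1 \<beta> lam s) + (\<integral>\<^sup>+ y. (if y = (0,0,0) then 0 else V y) \<partial>measure_pmf (k2 s)) \<le> V s" for s
  proof -
    obtain x xh d where s: "s = (x, xh, d)" by (cases s)
    define c where "c = A + B * (real d + 1)"
    have c: "0 \<le> c" using A B by (simp add: c_def)
    have "(\<integral>\<^sup>+ y. (if y = (0,0,0) then 0 else V y) \<partial>measure_pmf (k2 s)) \<le>
          (\<integral>\<^sup>+ y. ennreal c * indicator (UNIV - {(0,0,0)}) y \<partial>measure_pmf (k2 s))"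
    proof (intro nn_integral_mono_AE AE_pmfI)
      fix y assume "y \<in> set_pmf (k2 s)"
      then have "snd (snd y) \<le> d + 1" using set_K2_age s by blast
      then have "A + B * real (snd (snd y)) \<le> c" using B unfolding c_def by (intro add_left_mono mult_left_mono) auto
      then show "(if y = (0,0,0) then 0 else V y) \<le> ennreal c * indicator (UNIV - {(0,0,0)}) y"
        by (auto simp: V_def intro: ennreal_leI)
    qed
    also have "\<dots> = ennreal c * emeasure (measure_pmf (k2 s)) (UNIV - {(0,0,0)})"
      by (rule nn_integral_cmult_indicator) simp
    also have "emeasure (measure_pmf (k2 s)) (UNIV - {(0,0,0)}) = 1 - ennreal (pmf (k2 s) (0,0,0))"
      by (subst emeasure_Diff) (auto simp: measure_pmf.emeasure_space_1 emeasure_pmf_single)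
    also have "\<dots> = ennreal (1 - pmf (k2 s) (0,0,0))"
      by (simp add: ennreal_minus[symmetric])
    also have "ennreal c * \<dots> = ennreal (c * (1 - pmf (k2 s) (0,0,0)))"
      by (simp add: ennreal_mult'[symmetric] c)
    also have "\<dots> \<le> ennreal (c * (1 - \<delta>))"
      using lb2_000[of s] c by (intro ennreal_leI mult_left_mono) (auto simp: \<delta>_def)
    finally have I: "(\<integral>\<^sup>+ y. (if y = (0,0,0) then 0 else V y) \<partial>measure_pmf (k2 s)) \<le> ennreal (c * (1 - \<delta>))" .
    have e: "0 \<le> exp_stage_cost p q ps f0 f1 \<beta> lam s" "exp_stage_cost p q ps f0 f1 \<beta> lam s \<le> real d + 1 + lam"
      using esc_bounds[OF assms] s by auto
    have iden: "c * (1 - \<delta>) = A + B * real d - (real d + 1 + lam)"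
      using d unfolding c_def A_def B_def by (simp add: field_simps)
    have "ennreal (exp_stage_cost p q ps f0 f1 \<beta> lam s) + (\<integral>\<^sup>+ y. (if y = (0,0,0) then 0 else V y) \<partial>measure_pmf (k2 s))
          \<le> ennreal (exp_stage_cost p q ps f0 f1 \<beta> lam s) + ennreal (c * (1 - \<delta>))"
      by (rule add_left_mono[OF I])
    also have "\<dots> = ennreal (exp_stage_cost p q ps f0 f1 \<beta> lam s + c * (1 - \<delta>))"
      using e c d by (simp add: ennreal_plus)
    also have "\<dots> \<le> V s" unfolding V_def s using e iden s by (intro ennreal_leI) auto
    finally show ?thesis .
  qed
  have "passage_cost k2 (0, 0, 0) (\<lambda>s. ennreal (exp_stage_cost p q ps f0 f1 \<beta> lam s)) i \<le> V i"
    by (rule passage_cost_le) (rule key)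
  also have "\<dots> < \<infinity>" by (simp add: V_def)
  finally show ?thesis .
qed

end

context model begin

definition "u t = kpow k2 t (0, 0, 0)"
definition "w t = kpow k1 t (0, 0)"

lemma u_Suc: "u (Suc t) = bind_pmf (u t) k2" by (simp add: u_def)
lemma w_Suc: "w (Suc t) = bind_pmf (w t) k1" by (simp add: w_def)

lemma map_pr_u: "map_pmf pr (u t) = w t"
proof (induction t)
  case 0 then show ?case by (simp add: u_def w_def pr_def)
next
  case (Suc t)
  have "map_pmf pr (u (Suc t)) = bind_pmf (u t) (\<lambda>s. k1 (pr s))"
    by (simp add: u_Suc map_bind_pmf map_pr_k2)
  also have "\<dots> = bind_pmf (map_pmf pr (u t)) k1" by (simp add: bind_map_pmf)
  finally show ?case by (simp add: Suc w_Suc)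
qed

lemma set_u: "set_pmf (u t) \<subseteq> S2"
proof (induction t)
  case 0 then show ?case by (simp add: u_def S2_def)
next
  case (Suc t) then show ?case using closed_S2 by (fastforce simp: u_Suc)
qed

lemma fin_u: "finite (set_pmf (u t))"
proof (induction t)
  case 0 then show ?case by (simp add: u_def)
next
  case (Suc t) then show ?case unfolding u_Suc set_bind_pmf by (intro finite_UN_I finite_K2)
qed

lemma int_u: "integrable (measure_pmf (u t)) (f :: _ \<Rightarrow> real)"
  by (rule integrable_measure_pmf_finite[OF fin_u])

lemma set_w: "set_pmf (w t) \<subseteq> S1"
proof (induction t)
  case 0 then show ?case by (simp add: w_def S1_def)
next
  case (Suc t) then show ?case using closed_S1 by (fastforce simp: w_Suc)
qed

definition "W t y = pmf (w t) y"

lemma W_rec: "W (Suc t) y = (\<Sum>s\<in>S1. W t s * pmf (k1 s) y)"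
  unfolding W_def w_Suc by (rule pmf_bind_S1[OF set_w])

lemma nu_rec: "pmf nu1 y = (\<Sum>s\<in>S1. pmf nu1 s * pmf (k1 s) y)"
  using pmf_bind_S1[OF set_nu1, of y] by (simp add: stat1)

lemma finS1: "finite S1" by (simp add: S1_eq)

lemma W_conv: "(\<lambda>t. W t y) \<longlonglongrightarrow> pmf nu1 y"
proof -
  define e where "e t = (\<Sum>s\<in>S1. \<bar>W t s - pmf nu1 s\<bar>)" for t
  have step: "e (Suc t) \<le> (1 - \<delta>0) * e t" for t
  proof -
    have "e (Suc t) = (\<Sum>y\<in>S1. \<bar>\<Sum>s\<in>S1. (W t s - pmf nu1 s) * pmf (k1 s) y\<bar>)"
      unfolding e_def W_rec by (subst nu_rec) (simp add: sum_subtractf left_diff_distrib)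
    also have "\<dots> \<le> (1 - \<delta>0) * (\<Sum>s\<in>S1. \<bar>W t s - pmf nu1 s\<bar>)"
    proof (rule doeblin_step)
      show "finite S1" "(0, 0) \<in> S1" by (auto simp: S1_def)
      show "\<And>s y. 0 \<le> pmf (k1 s) y" by simp
      show "(\<Sum>y\<in>S1. pmf (k1 s) y) = 1" if "s \<in> S1" for s
        using sum_pmf_eq_1[OF finS1 closed_S1[OF that]] .
      show "\<delta>0 \<le> pmf (k1 s) (0, 0)" for s by (rule lb00')
      have "(\<Sum>s\<in>S1. W t s) = 1" unfolding W_def by (rule sum_pmf_eq_1[OF finS1 set_w])
      moreover have "(\<Sum>s\<in>S1. pmf nu1 s) = 1" by (rule sum_pmf_eq_1[OF finS1 set_nu1])
      ultimately show "(\<Sum>s\<in>S1. W t s - pmf nu1 s) = 0" by (simp add: sum_subtractf)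
    qed
    finally show ?thesis unfolding e_def .
  qed
  have d: "0 \<le> 1 - \<delta>0" "1 - \<delta>0 < 1" using \<delta>0_pos \<delta>0_le by auto
  have eb: "e t \<le> (1 - \<delta>0) ^ t * e 0" for t
  proof (induction t)
    case (Suc t)
    have "e (Suc t) \<le> (1 - \<delta>0) * e t" by (rule step)
    also have "\<dots> \<le> (1 - \<delta>0) * ((1 - \<delta>0) ^ t * e 0)" using Suc d by (intro mult_left_mono) auto
    finally show ?case by simp
  qed simp
  have "(\<lambda>t. W t y - pmf nu1 y) \<longlonglongrightarrow> 0"
  proof (cases "y \<in> S1")
    case True
    show ?thesis
    proof (rule Lim_null_comparison)
      show "\<forall>\<^sub>F t in sequentially. norm (W t y - pmf nu1 y) \<le> (1 - \<delta>0) ^ t * e 0"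
      proof (intro always_eventually allI)
        fix t
        have "\<bar>W t y - pmf nu1 y\<bar> \<le> e t"
          unfolding e_def by (rule member_le_sum[OF True]) (auto simp: finS1)
        then show "norm (W t y - pmf nu1 y) \<le> (1 - \<delta>0) ^ t * e 0" using eb[of t] by simp
      qed
      show "(\<lambda>t. (1 - \<delta>0) ^ t * e 0) \<longlonglongrightarrow> 0"
        using tendsto_mult[OF LIMSEQ_power_zero[of "1 - \<delta>0"] tendsto_const[of "e 0"]] d by simp
    qed
  next
    case False
    have "W t y = 0" for t using False set_w[of t] by (auto simp: W_def pmf_eq_0_set_pmf)
    moreover have "pmf nu1 y = 0" using False set_nu1 by (auto simp: pmf_eq_0_set_pmf)
    ultimately show ?thesis by simp
  qed
  then show ?thesis by (rule LIM_zero_cancel)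
qed

end

context model begin

definition "mm t = measure_pmf.expectation (u t) h10"
definition "nn t = measure_pmf.expectation (u t) h01"
definition "ind a v = (if v = a then 1 else (0::real))"

lemma E_u_pr: "measure_pmf.expectation (u t) (\<lambda>s. f (pr s)) = measure_pmf.expectation (w t) (f :: _ \<Rightarrow> real)"
  by (simp flip: map_pr_u)

lemma E_w_ind: "measure_pmf.expectation (w t) (ind a) = W t a"
  unfolding W_def by (subst integral_single[where a=a]) (auto simp: ind_def)

lemma phi10: "s \<in> S2 \<Longrightarrow> measure_pmf.expectation (k2 s) h10 =
   p * (1 - A0) * ind (0,0) (pr s) + (1 - q) * (1 - A1) * (ind (1,0) (pr s) + h10 s)"
  unfolding S2_cases
proof (elim disjE exE)
  assume s: "s = (0,0,0)" show ?thesis unfolding s Eh10 k1_vals by (simp add: pr_def ind_def h10_def)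
next
  assume s: "s = (1,1,0)" show ?thesis unfolding s Eh10 k1_vals by (simp add: pr_def ind_def h10_def)
next
  fix k assume s: "s = (1,0,Suc k)" show ?thesis unfolding s Eh10 k1_vals by (simp add: pr_def ind_def h10_def algebra_simps)
next
  fix k assume s: "s = (0,1,Suc k)" show ?thesis unfolding s Eh10 k1_vals by (simp add: pr_def ind_def h10_def)
qed

lemma phi01: "s \<in> S2 \<Longrightarrow> measure_pmf.expectation (k2 s) h01 =
   q * (1 - A1) * ind (1,1) (pr s) + (1 - p) * (1 - A0) * (ind (0,1) (pr s) + h01 s)"
  unfolding S2_cases
proof (elim disjE exE)
  assume s: "s = (0,0,0)" show ?thesis unfolding s Eh01 k1_vals by (simp add: pr_def ind_def h01_def)
next
  assume s: "s = (1,1,0)" show ?thesis unfolding s Eh01 k1_vals by (simp add: pr_def ind_def h01_def)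
next
  fix k assume s: "s = (1,0,Suc k)" show ?thesis unfolding s Eh01 k1_vals by (simp add: pr_def ind_def h01_def)
next
  fix k assume s: "s = (0,1,Suc k)" show ?thesis unfolding s Eh01 k1_vals by (simp add: pr_def ind_def h01_def algebra_simps)
qed

lemma E_next: "measure_pmf.expectation (u (Suc t)) f = measure_pmf.expectation (u t) (\<lambda>s. measure_pmf.expectation (k2 s) (f :: _ \<Rightarrow> real))"
  unfolding u_Suc by (rule integral_bind_fin) (auto simp: fin_u finite_K2)

lemma E_u_cong: "(\<And>s. s \<in> S2 \<Longrightarrow> f s = g s) \<Longrightarrow> measure_pmf.expectation (u t) f = measure_pmf.expectation (u t) (g :: _ \<Rightarrow> real)"
  using set_u[of t] by (intro integral_cong_AE) (auto simp: AE_measure_pmf_iff)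

lemma mm_rec: "mm (Suc t) = (1 - q) * (1 - A1) * mm t + (p * (1 - A0) * W t (0,0) + (1 - q) * (1 - A1) * W t (1,0))"
proof -
  have "mm (Suc t) = measure_pmf.expectation (u t)
      (\<lambda>s. p * (1 - A0) * ind (0,0) (pr s) + (1 - q) * (1 - A1) * (ind (1,0) (pr s) + h10 s))"
    unfolding mm_def E_next by (rule E_u_cong) (rule phi10)
  also have "\<dots> = p * (1 - A0) * measure_pmf.expectation (u t) (\<lambda>s. ind (0,0) (pr s)) +
      (1 - q) * (1 - A1) * (measure_pmf.expectation (u t) (\<lambda>s. ind (1,0) (pr s)) + mm t)"
    unfolding mm_def by (simp add: int_u)
  also have "\<dots> = p * (1 - A0) * W t (0,0) + (1 - q) * (1 - A1) * (W t (1,0) + mm t)"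
    by (simp only: E_u_pr E_w_ind)
  finally show ?thesis by (simp add: algebra_simps)
qed

lemma nn_rec: "nn (Suc t) = (1 - p) * (1 - A0) * nn t + (q * (1 - A1) * W t (1,1) + (1 - p) * (1 - A0) * W t (0,1))"
proof -
  have "nn (Suc t) = measure_pmf.expectation (u t)
      (\<lambda>s. q * (1 - A1) * ind (1,1) (pr s) + (1 - p) * (1 - A0) * (ind (0,1) (pr s) + h01 s))"
    unfolding nn_def E_next by (rule E_u_cong) (rule phi01)
  also have "\<dots> = q * (1 - A1) * measure_pmf.expectation (u t) (\<lambda>s. ind (1,1) (pr s)) +
      (1 - p) * (1 - A0) * (measure_pmf.expectation (u t) (\<lambda>s. ind (0,1) (pr s)) + nn t)"
    unfolding nn_def by (simp add: int_u)
  also have "\<dots> = q * (1 - A1) * W t (1,1) + (1 - p) * (1 - A0) * (W t (0,1) + nn t)"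
    by (simp only: E_u_pr E_w_ind)
  finally show ?thesis by (simp add: algebra_simps)
qed

definition "fxv v = (if fst v = 0 then f0 else f1)"

lemma E_fx: "measure_pmf.expectation (u t) (\<lambda>s. lam * (if fst s = 0 then f0 else f1)) =
    lam * (f0 * W t (0,0) + f0 * W t (0,1) + f1 * W t (1,0) + f1 * W t (1,1))"
proof -
  have "measure_pmf.expectation (u t) (\<lambda>s. lam * (if fst s = 0 then f0 else f1)) =
        lam * measure_pmf.expectation (u t) (\<lambda>s. fxv (pr s))"
    by (simp add: fxv_def pr_def)
  also have "measure_pmf.expectation (u t) (\<lambda>s. fxv (pr s)) = measure_pmf.expectation (w t) fxv"
    by (rule E_u_pr)
  also have "\<dots> = (\<Sum>v\<in>S1. fxv v * W t v)"
    unfolding W_def by (rule integral_measure_pmf_real[OF finS1]) (use set_w in auto)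
  also have "\<dots> = f0 * W t (0,0) + f0 * W t (0,1) + f1 * W t (1,0) + f1 * W t (1,1)"
    by (simp only: sum_S1) (simp add: fxv_def)
  finally show ?thesis .
qed

lemma a_eq:
  "measure_pmf.expectation (u t) (exp_stage_cost p q ps f0 f1 \<beta> lam) =
     \<beta> * mm (Suc t) + (1 - \<beta>) * nn (Suc t) + lam * (f0 * W t (0,0) + f0 * W t (0,1) + f1 * W t (1,0) + f1 * W t (1,1))"
proof -
  have "measure_pmf.expectation (u t) (exp_stage_cost p q ps f0 f1 \<beta> lam) =
     measure_pmf.expectation (u t) (\<lambda>s. \<beta> * measure_pmf.expectation (k2 s) h10 + (1 - \<beta>) * measure_pmf.expectation (k2 s) h01
        + lam * (if fst s = 0 then f0 else f1))"
  proof -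
    have "exp_stage_cost p q ps f0 f1 \<beta> lam = (\<lambda>s. \<beta> * measure_pmf.expectation (k2 s) h10 + (1 - \<beta>) * measure_pmf.expectation (k2 s) h01
        + lam * (if fst s = 0 then f0 else f1))"
      by (rule ext) (simp only: esc_eq Ecst)
    then show ?thesis by (simp only:)
  qed
  also have "\<dots> = \<beta> * measure_pmf.expectation (u t) (\<lambda>s. measure_pmf.expectation (k2 s) h10)
      + (1 - \<beta>) * measure_pmf.expectation (u t) (\<lambda>s. measure_pmf.expectation (k2 s) h01)
      + measure_pmf.expectation (u t) (\<lambda>s. lam * (if fst s = 0 then f0 else f1))"
    by (simp add: int_u)
  also have "\<dots> = \<beta> * mm (Suc t) + (1 - \<beta>) * nn (Suc t) + lam * (f0 * W t (0,0) + f0 * W t (0,1) + f1 * W t (1,0) + f1 * W t (1,1))"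
    by (simp only: E_fx mm_def nn_def E_next)
  finally show ?thesis .
qed

end

context model begin

lemma sum_shift1: "(\<Sum>t = 1..T. g (t - 1)) = (\<Sum>t<T. (g :: nat \<Rightarrow> real) t)"
  by (induction T) auto

lemma avg_val:
  "avg_cost p q ps f0 f1 \<beta> lam =
        ereal (\<beta> * p * (1 - ps * f0) * nu00 p q (ps * f0) (ps * f1) / (1 - (1 - q) * (1 - ps * f1))\<^sup>2
             + (1 - \<beta>) * q * (1 - ps * f1) * nu11 p q (ps * f0) (ps * f1) / (1 - (1 - p) * (1 - ps * f0))\<^sup>2
             + lam * (q * f0 + p * f1) / (p + q))"
proof -
  define r1 where "r1 = (1 - q) * (1 - A1)"
  define r2 where "r2 = (1 - p) * (1 - A0)"
  have r1: "0 \<le> r1" "r1 < 1" "0 < 1 - r1" and r2: "0 \<le> r2" "r2 < 1" "0 < 1 - r2"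
    using th_bnd[of 1] th_bnd[of 0] hp hq a0 a1 by (auto simp: r1_def r2_def th_def)
  define a where "a t = measure_pmf.expectation (u t) (exp_stage_cost p q ps f0 f1 \<beta> lam)" for t
  have Wc: "(\<lambda>t. W t v) \<longlonglongrightarrow> pmf nu1 v" for v by (rule W_conv)
  have W00: "(\<lambda>t. W t (0,0)) \<longlonglongrightarrow> n00" using Wc[of "(0,0)"] unfolding pmf_nu1 .
  have W01: "(\<lambda>t. W t (0,1)) \<longlonglongrightarrow> n01" using Wc[of "(0,1)"] unfolding pmf_nu1 .
  have W10: "(\<lambda>t. W t (1,0)) \<longlonglongrightarrow> n10" using Wc[of "(1,0)"] unfolding pmf_nu1 .
  have W11: "(\<lambda>t. W t (1,1)) \<longlonglongrightarrow> n11" using Wc[of "(1,1)"] unfolding pmf_nu1 .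
  define B1 where "B1 = p * (1 - A0) * n00 + r1 * n10"
  define B2 where "B2 = q * (1 - A1) * n11 + r2 * n01"
  have mc: "mm \<longlonglongrightarrow> B1 / (1 - r1)"
  proof (rule lin_rec_lim[where b="\<lambda>t. p * (1 - A0) * W t (0,0) + (1 - q) * (1 - A1) * W t (1,0)"])
    show "mm (Suc t) = r1 * mm t + (p * (1 - A0) * W t (0,0) + (1 - q) * (1 - A1) * W t (1,0))" for t
      unfolding r1_def by (rule mm_rec)
    show "0 \<le> r1" "r1 < 1" using r1 by auto
    show "(\<lambda>t. p * (1 - A0) * W t (0,0) + (1 - q) * (1 - A1) * W t (1,0)) \<longlonglongrightarrow> B1"
      unfolding B1_def r1_def by (intro tendsto_intros W00 W10)
  qed
  have nc: "nn \<longlonglongrightarrow> B2 / (1 - r2)"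
  proof (rule lin_rec_lim[where b="\<lambda>t. q * (1 - A1) * W t (1,1) + (1 - p) * (1 - A0) * W t (0,1)"])
    show "nn (Suc t) = r2 * nn t + (q * (1 - A1) * W t (1,1) + (1 - p) * (1 - A0) * W t (0,1))" for t
      unfolding r2_def by (rule nn_rec)
    show "0 \<le> r2" "r2 < 1" using r2 by auto
    show "(\<lambda>t. q * (1 - A1) * W t (1,1) + (1 - p) * (1 - A0) * W t (0,1)) \<longlonglongrightarrow> B2"
      unfolding B2_def r2_def by (intro tendsto_intros W11 W01)
  qed
  define Lv where "Lv = \<beta> * (B1 / (1 - r1)) + (1 - \<beta>) * (B2 / (1 - r2)) + lam * (f0 * n00 + f0 * n01 + f1 * n10 + f1 * n11)"
  have ac: "a \<longlonglongrightarrow> Lv"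
  proof -
    have "(\<lambda>t. \<beta> * mm (Suc t) + (1 - \<beta>) * nn (Suc t) + lam * (f0 * W t (0,0) + f0 * W t (0,1) + f1 * W t (1,0) + f1 * W t (1,1))) \<longlonglongrightarrow> Lv"
      unfolding Lv_def by (intro tendsto_intros W00 W01 W10 W11 LIMSEQ_Suc[OF mc] LIMSEQ_Suc[OF nc])
    moreover have "a = (\<lambda>t. \<beta> * mm (Suc t) + (1 - \<beta>) * nn (Suc t) + lam * (f0 * W t (0,0) + f0 * W t (0,1) + f1 * W t (1,0) + f1 * W t (1,1)))"
      by (rule ext) (simp only: a_def a_eq)
    ultimately show ?thesis by (simp only:)
  qed
  have ces: "(\<lambda>T. (1 / real T) * (\<Sum>t<T. a t)) \<longlonglongrightarrow> Lv" by (rule cesaro[OF ac])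
  have eq_in: "(1 / real T) * (\<Sum>t = 1..T. measure_pmf.expectation (kpow (K2 p q ps f0 f1) (t - 1) (0, 0, 0))
          (exp_stage_cost p q ps f0 f1 \<beta> lam)) = (1 / real T) * (\<Sum>t<T. a t)" for T
    using sum_shift1[of a T] by (simp add: a_def u_def)
  have "avg_cost p q ps f0 f1 \<beta> lam = limsup (\<lambda>T. ereal ((1 / real T) * (\<Sum>t<T. a t)))"
    unfolding avg_cost_def eq_in ..
  also have "\<dots> = ereal Lv"
    by (rule lim_imp_Limsup[OF trivial_limit_sequentially tendsto_ereal[OF ces]])
  also have "Lv = \<beta> * p * (1 - ps * f0) * nu00 p q (ps * f0) (ps * f1) / (1 - (1 - q) * (1 - ps * f1))\<^sup>2
             + (1 - \<beta>) * q * (1 - ps * f1) * nu11 p q (ps * f0) (ps * f1) / (1 - (1 - p) * (1 - ps * f0))\<^sup>2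
             + lam * (q * f0 + p * f1) / (p + q)"
  proof -
    have t1: "n10 * (1 - r1) = p * (1 - A0) * n00" using th_rel(1) by (simp add: th_def r1_def)
    have t2: "n01 * (1 - r2) = q * (1 - A1) * n11" using th_rel(2) by (simp add: th_def r2_def)
    have e1: "B1 / (1 - r1) = p * (1 - A0) * n00 / (1 - r1)\<^sup>2"
    proof -
      have "B1 = n10" unfolding B1_def using t1 by (simp add: algebra_simps)
      moreover have "n10 / (1 - r1) = n10 * (1 - r1) / (1 - r1)\<^sup>2"
        using r1 by (simp add: power2_eq_square)
      ultimately show ?thesis unfolding t1 by simp
    qed
    have e2: "B2 / (1 - r2) = q * (1 - A1) * n11 / (1 - r2)\<^sup>2"
    proof -
      have "B2 = n01" unfolding B2_def using t2 by (simp add: algebra_simps)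
      moreover have "n01 / (1 - r2) = n01 * (1 - r2) / (1 - r2)\<^sup>2"
        using r2 by (simp add: power2_eq_square)
      ultimately show ?thesis unfolding t2 by simp
    qed
    have pq: "0 < p + q" using hp hq by simp
    have s1: "n00 + n01 = q / (p + q)"
      using I7[of p q A0 A1] Npos pq unfolding n_defs zz_def by (simp add: field_simps)
    have s2: "n10 + n11 = p / (p + q)"
      using I8[of p q A0 A1] Npos pq unfolding n_defs zz_def by (simp add: field_simps)
    have e3: "f0 * n00 + f0 * n01 + f1 * n10 + f1 * n11 = (q * f0 + p * f1) / (p + q)"
    proof -
      have "f0 * n00 + f0 * n01 + f1 * n10 + f1 * n11 = f0 * (n00 + n01) + f1 * (n10 + n11)" by (simp add: algebra_simps)
      also have "\<dots> = (q * f0 + p * f1) / (p + q)" unfolding s1 s2 by (simp add: add_divide_distrib mult.commute)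
      finally show ?thesis .
    qed
    show ?thesis unfolding Lv_def e1 e2 e3 unfolding r1_def r2_def n00_def n11_def
      by (simp only: times_divide_eq_right mult.assoc)
  qed
  finally show ?thesis .
qed

end


theorem proposition1:
  fixes p q ps f0 f1 \<beta> lam :: real
  assumes hp: "0 < p" "p < 1"
    and hq: "0 < q" "q < 1"
    and hps: "0 < ps" "ps \<le> 1"
    and hf0: "0 < f0" "f0 \<le> 1" "ps * f0 < 1"
    and hf1: "0 < f1" "f1 \<le> 1" "ps * f1 < 1"
    and h\<beta>: "0 \<le> \<beta>" "\<beta> \<le> 1"
    and hlam: "0 \<le> lam"
  shows
    \<comment> \<open>(i) MC1\<close>
    "(finite S1 \<and> ergodic_on (K1 p q ps f0 f1) S1 \<and>
      (\<exists>\<nu>. stationary_on (K1 p q ps f0 f1) S1 \<nu> \<and>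
           pmf \<nu> (0, 0) = nu00 p q (ps * f0) (ps * f1) \<and> pmf \<nu> (0, 1) = nu01 p q (ps * f0) (ps * f1) \<and>
           pmf \<nu> (1, 0) = nu10 p q (ps * f0) (ps * f1) \<and> pmf \<nu> (1, 1) = nu11 p q (ps * f0) (ps * f1)))
    \<comment> \<open>(ii) MC2\<close>
   \<and> (countable S2 \<and> irreducible_on (K2 p q ps f0 f1) S2 \<and>
      positive_recurrent_on (K2 p q ps f0 f1) S2 \<and>
      (\<exists>\<nu>. stationary_on (K2 p q ps f0 f1) S2 \<nu> \<and>
           pmf \<nu> (0, 0, 0) = nu00 p q (ps * f0) (ps * f1) \<and> pmf \<nu> (1, 1, 0) = nu11 p q (ps * f0) (ps * f1) \<and>
           (\<forall>k\<ge>1. pmf \<nu> (1, 0, k) = p * (1 - ps * f0) * ((1 - q) * (1 - ps * f1)) ^ (k - 1) * nu00 p q (ps * f0) (ps * f1)) \<and>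
           (\<forall>k\<ge>1. pmf \<nu> (0, 1, k) = q * (1 - ps * f1) * ((1 - p) * (1 - ps * f0)) ^ (k - 1) * nu11 p q (ps * f0) (ps * f1))) \<and>
      avg_cost p q ps f0 f1 \<beta> lam =
        ereal (\<beta> * p * (1 - ps * f0) * nu00 p q (ps * f0) (ps * f1) / (1 - (1 - q) * (1 - ps * f1))\<^sup>2
             + (1 - \<beta>) * q * (1 - ps * f1) * nu11 p q (ps * f0) (ps * f1) / (1 - (1 - p) * (1 - ps * f0))\<^sup>2
             + lam * (q * f0 + p * f1) / (p + q)))
    \<comment> \<open>(iii) and (iv)\<close>
   \<and> (\<exists>z\<in>S2.
        (\<forall>i\<in>S2 - {z}. passage_time (K2 p q ps f0 f1) z i < \<infinity>) \<and>
        (\<forall>i\<in>S2 - {z}. passage_cost (K2 p q ps f0 f1) z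
                          (\<lambda>s. ennreal (exp_stage_cost p q ps f0 f1 \<beta> lam s)) i < \<infinity>))"
proof -
  interpret model p q ps f0 f1
    by unfold_locales (use hp hq hps hf0 hf1 in auto)
  have P1: "finite S1 \<and> ergodic_on (K1 p q ps f0 f1) S1 \<and>
      (\<exists>\<nu>. stationary_on (K1 p q ps f0 f1) S1 \<nu> \<and>
           pmf \<nu> (0, 0) = nu00 p q (ps * f0) (ps * f1) \<and> pmf \<nu> (0, 1) = nu01 p q (ps * f0) (ps * f1) \<and>
           pmf \<nu> (1, 0) = nu10 p q (ps * f0) (ps * f1) \<and> pmf \<nu> (1, 1) = nu11 p q (ps * f0) (ps * f1))"
  proof (intro conjI exI[of _ nu1])
    show "finite S1" by (simp add: S1_def)
    show "ergodic_on (K1 p q ps f0 f1) S1" by (rule ergodic1)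
    show "stationary_on (K1 p q ps f0 f1) S1 nu1" unfolding stationary_on_def using set_nu1 stat1 by simp
    show "pmf nu1 (0, 0) = nu00 p q (ps * f0) (ps * f1)" "pmf nu1 (0, 1) = nu01 p q (ps * f0) (ps * f1)"
      "pmf nu1 (1, 0) = nu10 p q (ps * f0) (ps * f1)" "pmf nu1 (1, 1) = nu11 p q (ps * f0) (ps * f1)"
      unfolding pmf_nu1 n00_def n01_def n10_def n11_def by (rule refl)+
  qed
  have st2: "\<exists>\<nu>. stationary_on (K2 p q ps f0 f1) S2 \<nu> \<and>
           pmf \<nu> (0, 0, 0) = nu00 p q (ps * f0) (ps * f1) \<and> pmf \<nu> (1, 1, 0) = nu11 p q (ps * f0) (ps * f1) \<and>
           (\<forall>k\<ge>1. pmf \<nu> (1, 0, k) = p * (1 - ps * f0) * ((1 - q) * (1 - ps * f1)) ^ (k - 1) * nu00 p q (ps * f0) (ps * f1)) \<and>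
           (\<forall>k\<ge>1. pmf \<nu> (0, 1, k) = q * (1 - ps * f1) * ((1 - p) * (1 - ps * f0)) ^ (k - 1) * nu11 p q (ps * f0) (ps * f1))"
  proof (intro conjI exI[of _ nu2] allI impI)
    show "stationary_on (K2 p q ps f0 f1) S2 nu2" unfolding stationary_on_def using set_nu2 stat2 by simp
    show "pmf nu2 (0, 0, 0) = nu00 p q (ps * f0) (ps * f1)" "pmf nu2 (1, 1, 0) = nu11 p q (ps * f0) (ps * f1)"
      unfolding pmf_nu2 n00_def n11_def by (rule refl)+
    fix k :: nat assume k: "1 \<le> k"
    then obtain j where j: "k = Suc j" by (cases k) auto
    show "pmf nu2 (1, 0, k) = p * (1 - ps * f0) * ((1 - q) * (1 - ps * f1)) ^ (k - 1) * nu00 p q (ps * f0) (ps * f1)"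
      unfolding j pmf_nu2 n00_def by simp
    show "pmf nu2 (0, 1, k) = q * (1 - ps * f1) * ((1 - p) * (1 - ps * f0)) ^ (k - 1) * nu11 p q (ps * f0) (ps * f1)"
      unfolding j pmf_nu2 n11_def by simp
  qed
  have P2: "countable S2" by (rule countableI_type)
  have P3: "\<exists>z\<in>S2.
        (\<forall>i\<in>S2 - {z}. passage_time (K2 p q ps f0 f1) z i < \<infinity>) \<and>
        (\<forall>i\<in>S2 - {z}. passage_cost (K2 p q ps f0 f1) z
                          (\<lambda>s. ennreal (exp_stage_cost p q ps f0 f1 \<beta> lam s)) i < \<infinity>)"
    using passage_time_000 passage_cost_000[OF h\<beta> hlam] by (intro bexI[of _ "(0,0,0)"]) (auto simp: S2_def)
  show ?thesis
    using P1 P2 st2 mc2_irr_pr avg_val P3 by blast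
qed


end
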